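(* (1) Let $a,b\in\mathbb{R}$, $s>0$, and let $W$ be the closed ball $B((a,b),s)\subset\mathbb{R}^{2}$. Then the function $f(x,y)=\frac{1}{|(x,y)-(a,b)|}$ restricted to $\mathbb{R}^{2}\setminus W$ is normal. (2) If $\rho\geq 0$ is a continuous function on $\mathbb{R}^{2}$ with compact support and $\rho\neq 0$, then the function $f(x,y)=\int_{\mathbb{R}^{2}}\frac{\rho(x',y')}{|(x,y)-(x',y')|}\,dx'dy'$ is quasi normal. (3) If $\rho$ is a smooth function on $\mathbb{R}^{2}$ with compact support and $\rho\neq 0$, then $f(x,y)=\int_{\mathbb{R}^{2}}\frac{\rho(x',y')}{|(x,y)-(x',y')|}\,dx'dy'$ is quasi split normal.
   Context: One-variable notions: a smooth $g:\mathbb{R}\setminus V\to\mathbb{R}$, $V\subset\mathbb{R}$ bounded closed, is analytic at infinity if there exist $\epsilon_{1},\epsilon_{2}>0$ such that $g(1/t)=\sum_{n\geq1}a_{n}t^{n}$ for $0<t<\epsilon_{1}$ and $g(1/t)=\sum_{n\geq1}b_{n}t^{n}$ for $-\epsilon_{2}<t<0$, with real coefficients and both power series absolutely convergent on the respective intervals. Two-variable notions: let $f:\mathbb{R}^{2}\setminus W\to\mathbb{R}$ be smooth with $W$ closed and bounded. $f$ is of very moderate decrease if there is $C>0$ with $|f(x,y)|\leq\frac{C}{|(x,y)|}$ for $|(x,y)|>1$, and of moderate decrease if $|f(x,y)|\leq\frac{C}{|(x,y)|^{2}}$ for $|(x,y)|>1$. For fixed $x$ write $f_{x}(y)=f(x,y)$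 and for fixed $y$ write $f_{y}(x)=f(x,y)$, with derivatives taken in the free variable. $f$ is normal if: (i) for every $x\in\mathbb{R}$, $f_{x}$ is analytic at infinity; (ii) for every $y\in\mathbb{R}$, $f_{y}$ is analytic at infinity; (iii) $f$ is of very moderate decrease; (iv) $\frac{\partial f}{\partial x}$ and $\frac{\partial f}{\partial y}$ are of moderate decrease; (v) there is a uniform bound (independent of $x$, $y$) on the number of zeros of $f_{x},(f_{x})',(f_{x})''$ and of $f_{y},(f_{y})',(f_{y})''$. $f$ is quasi normal if (i)–(iv) hold and (v)': for sufficiently large $x$, the zeros of $f_{x}$ are contained in a union $(-M_{x},-N_{x})\cup(N_{x},M_{x})$ of bounded intervals with $M_{x}-N_{x}$ uniformly bounded in $x$, and similarly for $(f_{x})'$, $(f_{x})''$ (with their own $M'_{x},N'_{x},M''_{x},N''_{x}$), and for $f_{y},(f_{y})',(f_{y})''$ with sufficiently large $y$. $f$ is quasi split normal if (i)–(iv) hold and (v)'': for sufficiently large $(x,y)$, $f=f_{1}+f_{2}$ with $f_{1},f_{2}$ quasi normal and $f,f_{1},f_{2}$ smooth. *)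

theory Defs
  imports "HOL-Analysis.Analysis"
begin

text \<open>Functions of two variables are total functions on real \<times> real (whose norm is the
Euclidean norm); only their values off the exceptional set W matter.\<close>

definition pd :: "bool \<Rightarrow> (real \<times> real \<Rightarrow> real) \<Rightarrow> (real \<times> real \<Rightarrow> real)" where
  "pd d g = (if d then (\<lambda>(x,y). deriv (\<lambda>t. g (t,y)) x) else (\<lambda>(x,y). deriv (\<lambda>t. g (x,t)) y))"

abbreviation dx where "dx \<equiv> pd True"
abbreviation dy where "dy \<equiv> pd False"

fun pderivs :: "bool list \<Rightarrow> (real \<times> real \<Rightarrow> real) \<Rightarrow> (real \<times> real \<Rightarrow> real)" where
  "pderivs [] f = f"
| "pderivs (d # ds) f = pd d (pderivs ds f)"

definition smooth_on :: "(real \<times> real) set \<Rightarrow> (real \<times> real \<Rightarrow> real) \<Rightarrow> bool" where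
  "smooth_on S f \<longleftrightarrow> open S \<and> (\<forall>ds. pderivs ds f differentiable_on S)"

definition analytic_at_infinity :: "real set \<Rightarrow> (real \<Rightarrow> real) \<Rightarrow> bool" where
  "analytic_at_infinity V g \<longleftrightarrow>
     (\<exists>e1 e2 (a::nat \<Rightarrow> real) (b::nat \<Rightarrow> real). e1 > 0 \<and> e2 > 0 \<and>
        (\<forall>t. 0 < t \<and> t < e1 \<and> 1/t \<notin> V \<longrightarrow>
            summable (\<lambda>n. \<bar>a n * t ^ (Suc n)\<bar>) \<and> (\<lambda>n. a n * t ^ (Suc n)) sums g (1/t)) \<and>
        (\<forall>t. -e2 < t \<and> t < 0 \<and> 1/t \<notin> V \<longrightarrow>
            summable (\<lambda>n. \<bar>b n * t ^ (Suc n)\<bar>) \<and> (\<lambda>n. b n * t ^ (Suc n)) sums g (1/t)))"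

definition very_moderate_decrease :: "(real \<times> real) set \<Rightarrow> (real \<times> real \<Rightarrow> real) \<Rightarrow> bool" where
  "very_moderate_decrease W f \<longleftrightarrow>
     (\<exists>C>0. \<forall>p. p \<notin> W \<and> norm p > 1 \<longrightarrow> \<bar>f p\<bar> \<le> C / norm p)"

definition moderate_decrease :: "(real \<times> real) set \<Rightarrow> (real \<times> real \<Rightarrow> real) \<Rightarrow> bool" where
  "moderate_decrease W f \<longleftrightarrow>
     (\<exists>C>0. \<forall>p. p \<notin> W \<and> norm p > 1 \<longrightarrow> \<bar>f p\<bar> \<le> C / (norm p)\<^sup>2)"

text \<open>Zero sets of f_x, (f_x)', (f_x)'' (k = 0,1,2) and of f_y, (f_y)', (f_y)''.\<close>
definition zeros_x :: "(real \<times> real) set \<Rightarrow> (real \<times> real \<Rightarrow> real) \<Rightarrow> nat \<Rightarrow> real \<Rightarrow> real set" where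
  "zeros_x W f k x = {y. (x,y) \<notin> W \<and> ((deriv ^^ k) (\<lambda>t. f (x,t))) y = 0}"

definition zeros_y :: "(real \<times> real) set \<Rightarrow> (real \<times> real \<Rightarrow> real) \<Rightarrow> nat \<Rightarrow> real \<Rightarrow> real set" where
  "zeros_y W f k y = {x. (x,y) \<notin> W \<and> ((deriv ^^ k) (\<lambda>t. f (t,y))) x = 0}"

definition basic_conditions :: "(real \<times> real) set \<Rightarrow> (real \<times> real \<Rightarrow> real) \<Rightarrow> bool" where
  "basic_conditions W f \<longleftrightarrow>
     closed W \<and> bounded W \<and> smooth_on (- W) f \<and>
     (\<forall>x. analytic_at_infinity {y. (x,y) \<in> W} (\<lambda>y. f (x,y))) \<and>
     (\<forall>y. analytic_at_infinity {x. (x,y) \<in> W} (\<lambda>x. f (x,y))) \<and>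
     very_moderate_decrease W f \<and>
     moderate_decrease W (dx f) \<and> moderate_decrease W (dy f)"

definition normal :: "(real \<times> real) set \<Rightarrow> (real \<times> real \<Rightarrow> real) \<Rightarrow> bool" where
  "normal W f \<longleftrightarrow> basic_conditions W f \<and>
     (\<exists>N::nat. \<forall>k\<le>2. \<forall>c.
        finite (zeros_x W f k c) \<and> card (zeros_x W f k c) \<le> N \<and>
        finite (zeros_y W f k c) \<and> card (zeros_y W f k c) \<le> N)"

definition quasi_normal :: "(real \<times> real) set \<Rightarrow> (real \<times> real \<Rightarrow> real) \<Rightarrow> bool" where
  "quasi_normal W f \<longleftrightarrow> basic_conditions W f \<and>
     (\<exists>R K. \<forall>k\<le>2. \<forall>c. \<bar>c\<bar> > R \<longrightarrow>
        (\<exists>M N::real. M - N \<le> K \<and> zeros_x W f k c \<subseteq> {-M<..<-N} \<union> {N<..<M}) \<and>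
        (\<exists>M N::real. M - N \<le> K \<and> zeros_y W f k c \<subseteq> {-M<..<-N} \<union> {N<..<M}))"

definition quasi_split_normal :: "(real \<times> real) set \<Rightarrow> (real \<times> real \<Rightarrow> real) \<Rightarrow> bool" where
  "quasi_split_normal W f \<longleftrightarrow> basic_conditions W f \<and>
     (\<exists>R f1 f2 W1 W2. quasi_normal W1 f1 \<and> quasi_normal W2 f2 \<and>
        (\<forall>p. norm p > R \<longrightarrow> f p = f1 p + f2 p))"

definition potential :: "(real \<times> real \<Rightarrow> real) \<Rightarrow> real \<times> real \<Rightarrow> real" where
  "potential \<rho> p = integral UNIV (\<lambda>q. \<rho> q / dist p q)"

end

theory Submission
  imports Defs "HOL-Complex_Analysis.Cauchy_Integral_Formula"
begin

datatype ex = Cst real | D1 | D2 | Iv | Ad ex ex | Mu ex ex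

fun ev :: "ex \<Rightarrow> real\<times>real \<Rightarrow> real\<times>real \<Rightarrow> real" where
  "ev (Cst c) p q = c"
| "ev D1 p q = fst p - fst q"
| "ev D2 p q = snd p - snd q"
| "ev Iv p q = 1 / dist p q"
| "ev (Ad a b) p q = ev a p q + ev b p q"
| "ev (Mu a b) p q = ev a p q * ev b p q"

fun dd :: "bool \<Rightarrow> ex \<Rightarrow> ex" where
  "dd d (Cst c) = Cst 0"
| "dd d D1 = Cst (if d then 1 else 0)"
| "dd d D2 = Cst (if d then 0 else 1)"
| "dd d Iv = Mu (Cst (-1)) (Mu (if d then D1 else D2) (Mu Iv (Mu Iv Iv)))"
| "dd d (Ad a b) = Ad (dd d a) (dd d b)"
| "dd d (Mu a b) = Ad (Mu (dd d a) b) (Mu a (dd d b))"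

definition grad :: "ex \<Rightarrow> real\<times>real \<Rightarrow> real\<times>real \<Rightarrow> real\<times>real" where
  "grad e p q = (ev (dd True e) p q, ev (dd False e) p q)"

lemma inner_pair_real: "(h::real\<times>real) \<bullet> (a,b) = fst h * a + snd h * b"
  by (cases h) (simp add: inner_Pair)

lemma ev_Iv_deriv:
  assumes "p \<noteq> q"
  shows "((\<lambda>p. 1 / dist p q) has_derivative (\<lambda>h. h \<bullet> grad Iv p q)) (at p)"
proof -
  have n: "norm (p - q) \<noteq> 0" using assms by simp
  have "((\<lambda>p. inverse (norm (p - q))) has_derivative
      (\<lambda>h. - (inverse (norm (p - q)) * (h \<bullet> sgn (p - q)) * inverse (norm (p - q))))) (at p)"
    using assms
    by (auto intro!: derivative_eq_intros has_derivative_norm[THEN has_derivative_compose[of _ _ _ _ norm, rotated]] simp: n)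
  moreover have "(\<lambda>h. - (inverse (norm (p - q)) * (h \<bullet> sgn (p - q)) * inverse (norm (p - q)))) = (\<lambda>h. h \<bullet> grad Iv p q)"
    using n by (auto simp: fun_eq_iff grad_def sgn_div_norm inner_prod_def field_simps dist_norm power3_eq_cube)
  ultimately show ?thesis by (simp add: dist_norm divide_inverse)
qed
lemma ev_deriv:
  assumes "p \<noteq> q"
  shows "((\<lambda>p. ev e p q) has_derivative (\<lambda>h. h \<bullet> grad e p q)) (at p)"
proof (induction e)
  case (Cst c) show ?case by (auto simp: grad_def intro!: derivative_eq_intros)
next
  case D1 show ?case by (auto simp: grad_def inner_pair_real intro!: derivative_eq_intros)
next
  case D2 show ?case by (auto simp: grad_def inner_pair_real intro!: derivative_eq_intros)
next
  case Iv show ?case using ev_Iv_deriv[OF assms] by simp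
next
  case (Ad a b) thus ?case
    by (auto simp: grad_def inner_pair_real algebra_simps intro!: derivative_eq_intros)
next
  case (Mu a b) thus ?case
    by (auto simp: grad_def inner_pair_real algebra_simps intro!: derivative_eq_intros)
qed

lemma ev_cont: "continuous_on {z. fst z \<noteq> snd z} (\<lambda>z. ev e (fst z) (snd z))"
proof (induction e)
  case Iv
  have "continuous_on {z. fst z \<noteq> snd z} (\<lambda>z. 1 / dist (fst z) (snd z))"
    by (intro continuous_intros) auto
  then show ?case by simp
qed (auto intro!: continuous_intros)

fun ddl :: "bool list \<Rightarrow> ex \<Rightarrow> ex" where
  "ddl [] e = e"
| "ddl (d # ds) e = dd d (ddl ds e)"

lemma open_slice1: "open (S::(real\<times>real) set) \<Longrightarrow> open {t. (t, y) \<in> S}"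
proof -
  assume "open S"
  have "open ((\<lambda>t::real. (t, y)) -` S)"
    by (rule continuous_open_vimage[OF \<open>open S\<close>]) (intro continuous_intros)
  then show ?thesis by (simp add: vimage_def)
qed

lemma open_slice2: "open (S::(real\<times>real) set) \<Longrightarrow> open {t. (x, t) \<in> S}"
proof -
  assume "open S"
  have "open ((\<lambda>t::real. (x, t)) -` S)"
    by (rule continuous_open_vimage[OF \<open>open S\<close>]) (intro continuous_intros)
  then show ?thesis by (simp add: vimage_def)
qed

lemma partial1:
  fixes F :: "real\<times>real \<Rightarrow> real"
  assumes "(F has_derivative (\<lambda>h. fst h * A + snd h * B)) (at (x, y))"
  shows "((\<lambda>t. F (t, y)) has_field_derivative A) (at x)"
proof -
  have "((\<lambda>t. (t, y)) has_derivative (\<lambda>h. (h, 0))) (at x)"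
    by (auto intro!: derivative_eq_intros)
  from has_derivative_compose[OF this assms]
  have "((\<lambda>t. F (t, y)) has_derivative (\<lambda>h. fst (h,0::real) * A + snd (h,0::real) * B)) (at x)" by simp
  then have "((\<lambda>t. F (t, y)) has_derivative (\<lambda>h. h * A)) (at x)" by simp
  then show ?thesis by (simp add: has_field_derivative_def mult.commute[of _ A] mult.commute[of _ B])
qed

lemma partial2:
  fixes F :: "real\<times>real \<Rightarrow> real"
  assumes "(F has_derivative (\<lambda>h. fst h * A + snd h * B)) (at (x, y))"
  shows "((\<lambda>t. F (x, t)) has_field_derivative B) (at y)"
proof -
  have "((\<lambda>t. (x, t)) has_derivative (\<lambda>h. (0, h))) (at y)"
    by (auto intro!: derivative_eq_intros)
  from has_derivative_compose[OF this assms]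
  have "((\<lambda>t. F (x, t)) has_derivative (\<lambda>h. fst (0::real,h) * A + snd (0::real,h) * B)) (at y)" by simp
  then have "((\<lambda>t. F (x, t)) has_derivative (\<lambda>h. h * B)) (at y)" by simp
  then show ?thesis by (simp add: has_field_derivative_def mult.commute[of _ A] mult.commute[of _ B])
qed

lemma pderivs_family:
  fixes \<Phi> :: "ex \<Rightarrow> real\<times>real \<Rightarrow> real"
  assumes S: "open S"
  assumes D: "\<And>e p. p \<in> S \<Longrightarrow> (\<Phi> e has_derivative (\<lambda>h. fst h * \<Phi> (dd True e) p + snd h * \<Phi> (dd False e) p)) (at p)"
  assumes f: "\<And>p. p \<in> S \<Longrightarrow> f p = \<Phi> ee p"
  shows "p \<in> S \<Longrightarrow> pderivs ds f p = \<Phi> (ddl ds ee) p"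
proof (induction ds arbitrary: p)
  case Nil then show ?case using f by simp
next
  case (Cons d ds)
  obtain x y where p: "p = (x, y)" by force
  show ?case
  proof (cases d)
    case True
    have "((\<lambda>t. \<Phi> (ddl ds ee) (t, y)) has_field_derivative \<Phi> (dd True (ddl ds ee)) p) (at x)"
      using partial1 D[of p "ddl ds ee"] Cons.prems p by simp
    then have "((\<lambda>t. pderivs ds f (t, y)) has_field_derivative \<Phi> (dd True (ddl ds ee)) p) (at x)"
      by (rule has_field_derivative_transform_within_open[OF _ open_slice1[OF S, of y]])
         (use Cons p in auto)
    then show ?thesis using True p by (simp add: pd_def DERIV_imp_deriv)
  next
    case False
    have "((\<lambda>t. \<Phi> (ddl ds ee) (x, t)) has_field_derivative \<Phi> (dd False (ddl ds ee)) p) (at y)"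
      using partial2 D[of p "ddl ds ee"] Cons.prems p by simp
    then have "((\<lambda>t. pderivs ds f (x, t)) has_field_derivative \<Phi> (dd False (ddl ds ee)) p) (at y)"
      by (rule has_field_derivative_transform_within_open[OF _ open_slice2[OF S, of x]])
         (use Cons p in auto)
    then show ?thesis using False p by (simp add: pd_def DERIV_imp_deriv)
  qed
qed

lemma smooth_family:
  fixes \<Phi> :: "ex \<Rightarrow> real\<times>real \<Rightarrow> real"
  assumes S: "open S"
  assumes D: "\<And>e p. p \<in> S \<Longrightarrow> (\<Phi> e has_derivative (\<lambda>h. fst h * \<Phi> (dd True e) p + snd h * \<Phi> (dd False e) p)) (at p)"
  assumes f: "\<And>p. p \<in> S \<Longrightarrow> f p = \<Phi> ee p"
  shows "smooth_on S f"
  unfolding smooth_on_def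
proof (intro conjI allI S)
  fix ds
  show "pderivs ds f differentiable_on S"
    unfolding differentiable_on_def
  proof
    fix p assume p: "p \<in> S"
    have "(pderivs ds f has_derivative (\<lambda>h. fst h * \<Phi> (dd True (ddl ds ee)) p + snd h * \<Phi> (dd False (ddl ds ee)) p)) (at p)"
      by (rule has_derivative_transform_within_open[OF D[OF p] S p])
         (use pderivs_family[OF S D f] in auto)
    then show "pderivs ds f differentiable at p within S"
      using differentiable_def has_derivative_at_withinI by blast
  qed
qed

lemma dist_sq: "dist p q ^ 2 = (fst p - fst q)^2 + (snd p - snd q)^2"
  by (cases p; cases q) (simp add: dist_Pair_Pair dist_real_def)

lemma ev1T: "ev (ddl [True] Iv) p q = -(fst p - fst q) / dist p q ^ 3"
  by (simp add: power3_eq_cube)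

lemma ev1F: "ev (ddl [False] Iv) p q = -(snd p - snd q) / dist p q ^ 3"
  by (simp add: power3_eq_cube)

lemma ev2T: "p \<noteq> q \<Longrightarrow> ev (ddl [True,True] Iv) p q = (2*(fst p - fst q)^2 - (snd p - snd q)^2) / dist p q ^ 5"
proof -
  assume "p \<noteq> q"
  then have d: "dist p q \<noteq> 0" by simp
  have "ev (ddl [True,True] Iv) p q = (3*(fst p - fst q)^2 - dist p q ^ 2) / dist p q ^ 5"
    using d by (simp add: field_simps power2_eq_square power3_eq_cube) (simp add: numeral_eq_Suc algebra_simps)
  also have "\<dots> = (2*(fst p - fst q)^2 - (snd p - snd q)^2) / dist p q ^ 5"
    by (simp add: dist_sq)
  finally show ?thesis .
qed

lemma ev2F: "p \<noteq> q \<Longrightarrow> ev (ddl [False,False] Iv) p q = (2*(snd p - snd q)^2 - (fst p - fst q)^2) / dist p q ^ 5"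
proof -
  assume "p \<noteq> q"
  then have d: "dist p q \<noteq> 0" by simp
  have "ev (ddl [False,False] Iv) p q = (3*(snd p - snd q)^2 - dist p q ^ 2) / dist p q ^ 5"
    using d by (simp add: field_simps power2_eq_square power3_eq_cube) (simp add: numeral_eq_Suc algebra_simps)
  also have "\<dots> = (2*(snd p - snd q)^2 - (fst p - fst q)^2) / dist p q ^ 5"
    by (simp add: dist_sq)
  finally show ?thesis .
qed

lemma deriv_funpow_y: "(deriv ^^ k) (\<lambda>t. f (x,t)) y = pderivs (replicate k False) f (x,y)"
proof (induction k arbitrary: y)
  case (Suc k)
  have "(deriv ^^ Suc k) (\<lambda>t. f (x,t)) y = deriv (\<lambda>t. (deriv ^^ k) (\<lambda>t. f (x,t)) t) y" by simp
  also have "(\<lambda>t. (deriv ^^ k) (\<lambda>t. f (x,t)) t) = (\<lambda>t. pderivs (replicate k False) f (x,t))"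
    using Suc by auto
  finally show ?case by (simp add: pd_def)
qed simp

lemma deriv_funpow_x: "(deriv ^^ k) (\<lambda>t. f (t,y)) x = pderivs (replicate k True) f (x,y)"
proof (induction k arbitrary: x)
  case (Suc k)
  have "(deriv ^^ Suc k) (\<lambda>t. f (t,y)) x = deriv (\<lambda>t. (deriv ^^ k) (\<lambda>t. f (t,y)) t) x" by simp
  also have "(\<lambda>t. (deriv ^^ k) (\<lambda>t. f (t,y)) t) = (\<lambda>t. pderivs (replicate k True) f (t,y))"
    using Suc by auto
  finally show ?case by (simp add: pd_def)
qed simp

lemma card_le2: "A \<subseteq> {u, v} \<Longrightarrow> finite A \<and> card A \<le> 2"
proof -
  assume A: "A \<subseteq> {u, v}"
  then have "finite A" using finite_subset by blast
  moreover have "card A \<le> card {u, v}" using A by (intro card_mono) auto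
  moreover have "card {u, v} \<le> 2" by (simp add: card_insert_le_m1)
  ultimately show ?thesis by simp
qed

lemma sq_cases: "(z::real)^2 = r \<Longrightarrow> z = sqrt r \<or> z = - sqrt r"
  by (metis abs_of_nonneg abs_of_nonpos linorder_le_cases minus_minus real_sqrt_abs)

lemma zero_set_2:
  fixes u w :: real
  assumes "\<And>y. y \<in> A \<Longrightarrow> 2 * (y - u)^2 = w"
  shows "finite A \<and> card A \<le> 2"
proof (rule card_le2[of _ "u + sqrt (w/2)" "u - sqrt (w/2)"])
  show "A \<subseteq> {u + sqrt (w/2), u - sqrt (w/2)}"
  proof
    fix y assume "y \<in> A"
    then have "2 * (y - u)^2 = w" using assms by blast
    then have "(y - u)^2 = w/2" by linarith
    from sq_cases[OF this] show "y \<in> {u + sqrt (w/2), u - sqrt (w/2)}" by auto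
  qed
qed

lemma inv_le_quot: "0 < (d::real) \<Longrightarrow> 0 < n \<Longrightarrow> n \<le> C * d \<Longrightarrow> 1 / d \<le> C / n"
  by (simp add: field_simps)

lemma abs_quot3: "\<bar>z::real\<bar> \<le> d \<Longrightarrow> d > 0 \<Longrightarrow> \<bar>-z / d^3\<bar> \<le> 1 / d^2"
proof -
  assume z: "\<bar>z\<bar> \<le> d" and d: "d > 0"
  have "\<bar>-z / d^3\<bar> = \<bar>z\<bar> / d^3" proof -
    have "\<bar>d^3\<bar> = d^3" by (rule abs_of_nonneg) (use d in simp)
    then show ?thesis by (simp add: abs_divide)
  qed
  also have "\<dots> \<le> d / d^3" using z d by (intro divide_right_mono) auto
  also have "\<dots> = 1 / d^2" using d by (simp add: power3_eq_cube power2_eq_square)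
  finally show ?thesis .
qed

lemma fst_le_dist: "\<bar>fst p - fst q\<bar> \<le> dist p q"
  by (metis dist_fst_le dist_real_def)
lemma snd_le_dist: "\<bar>snd p - snd q\<bar> \<le> dist p q"
  by (metis dist_snd_le dist_real_def)

context
  fixes a b s :: real
  assumes s: "s > 0"
begin

definition "W1 = cball (a,b) s"
definition "f1 = (\<lambda>p. 1 / dist p (a,b))"

lemma notW1: "p \<notin> W1 \<Longrightarrow> dist p (a,b) > s"
  by (auto simp: W1_def dist_commute)

lemma notW1_ne: "p \<notin> W1 \<Longrightarrow> p \<noteq> (a,b)"
  using notW1 s by fastforce

lemma f1_pderivs: "p \<notin> W1 \<Longrightarrow> pderivs ds f1 p = ev (ddl ds Iv) p (a,b)"
proof (rule pderivs_family[where \<Phi> = "\<lambda>e p. ev e p (a,b)" and S = "- W1"])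
  show "open (- W1)" unfolding W1_def by (rule open_Compl[OF closed_cball])
  fix e p assume "p \<in> - W1"
  then have "p \<noteq> (a,b)" using notW1_ne by auto
  from ev_deriv[OF this, of e]
  show "((\<lambda>p. ev e p (a,b)) has_derivative (\<lambda>h. fst h * ev (dd True e) p (a,b) + snd h * ev (dd False e) p (a,b))) (at p)"
    by (simp add: grad_def inner_pair_real)
qed (auto simp: f1_def)

lemma f1_smooth: "smooth_on (- W1) f1"
proof (rule smooth_family[where \<Phi> = "\<lambda>e p. ev e p (a,b)" and ee = Iv])
  show "open (- W1)" unfolding W1_def by (rule open_Compl[OF closed_cball])
  fix e p assume "p \<in> - W1"
  then have "p \<noteq> (a,b)" using notW1_ne by auto
  from ev_deriv[OF this, of e]
  show "((\<lambda>p. ev e p (a,b)) has_derivative (\<lambda>h. fst h * ev (dd True e) p (a,b) + snd h * ev (dd False e) p (a,b))) (at p)"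
    by (simp add: grad_def inner_pair_real)
qed (auto simp: f1_def)

lemma f1_zeros_x: "k \<le> 2 \<Longrightarrow> finite (zeros_x W1 f1 k x) \<and> card (zeros_x W1 f1 k x) \<le> 2"
proof -
  assume k: "k \<le> 2"
  have Z: "zeros_x W1 f1 k x = {y. (x,y) \<notin> W1 \<and> ev (ddl (replicate k False) Iv) (x,y) (a,b) = 0}"
    by (auto simp: zeros_x_def deriv_funpow_y f1_pderivs)
  have "k = 0 \<or> k = 1 \<or> k = 2" using k by auto
  then show ?thesis
  proof (elim disjE)
    assume "k = 0"
    moreover have "(a,b) \<in> W1" using s by (simp add: W1_def)
    ultimately have "zeros_x W1 f1 k x = {}" using Z notW1 s by auto
    then show ?thesis by simp
  next
    assume "k = 1"
    then have "zeros_x W1 f1 k x \<subseteq> {b, b}" using Z notW1_ne by auto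
    then show ?thesis by (rule card_le2)
  next
    assume k2: "k = 2"
    show ?thesis
    proof (rule zero_set_2[where u = b and w = "(x-a)^2"])
      fix y assume "y \<in> zeros_x W1 f1 k x"
      then have "(x,y) \<notin> W1" "ev (ddl [False,False] Iv) (x,y) (a,b) = 0"
        using Z k2 by (auto simp: numeral_2_eq_2)
      then show "2 * (y - b)^2 = (x-a)^2" using ev2F[of "(x,y)" "(a,b)"] notW1_ne by auto
    qed
  qed
qed

lemma f1_zeros_y: "k \<le> 2 \<Longrightarrow> finite (zeros_y W1 f1 k y) \<and> card (zeros_y W1 f1 k y) \<le> 2"
proof -
  assume k: "k \<le> 2"
  have Z: "zeros_y W1 f1 k y = {x. (x,y) \<notin> W1 \<and> ev (ddl (replicate k True) Iv) (x,y) (a,b) = 0}"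
    by (auto simp: zeros_y_def deriv_funpow_x f1_pderivs)
  have "k = 0 \<or> k = 1 \<or> k = 2" using k by auto
  then show ?thesis
  proof (elim disjE)
    assume "k = 0"
    moreover have "(a,b) \<in> W1" using s by (simp add: W1_def)
    ultimately have "zeros_y W1 f1 k y = {}" using Z notW1 s by auto
    then show ?thesis by simp
  next
    assume "k = 1"
    then have "zeros_y W1 f1 k y \<subseteq> {a, a}" using Z notW1_ne by auto
    then show ?thesis by (rule card_le2)
  next
    assume k2: "k = 2"
    show ?thesis
    proof (rule zero_set_2[where u = a and w = "(y-b)^2"])
      fix x assume "x \<in> zeros_y W1 f1 k y"
      then have "(x,y) \<notin> W1" "ev (ddl [True,True] Iv) (x,y) (a,b) = 0"
        using Z k2 by (auto simp: numeral_2_eq_2)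
      then show "2 * (x - a)^2 = (y-b)^2" using ev2T[of "(x,y)" "(a,b)"] notW1_ne by auto
    qed
  qed
qed

lemma norm_le_Cdist: "p \<notin> W1 \<Longrightarrow> norm p \<le> (1 + norm (a,b) / s) * dist p (a,b)"
proof -
  assume p: "p \<notin> W1"
  have d: "dist p (a,b) > s" using notW1[OF p] .
  have 1: "norm p \<le> dist p (a,b) + norm (a,b)"
    using norm_triangle_ineq[of "p - (a,b)" "(a,b)"] by (simp add: dist_norm)
  have "s * norm (a,b) \<le> dist p (a,b) * norm (a,b)"
    by (rule mult_right_mono) (use d in auto)
  then have 2: "norm (a,b) \<le> norm (a,b) / s * dist p (a,b)"
    using d s by (simp add: field_simps)
  have "(1 + norm (a,b) / s) * dist p (a,b) = dist p (a,b) + norm (a,b) / s * dist p (a,b)"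
    by (simp add: algebra_simps)
  with 1 2 show ?thesis by linarith
qed

lemma f1_vmd: "very_moderate_decrease W1 f1"
  unfolding very_moderate_decrease_def
proof (intro exI[of _ "1 + norm (a,b) / s"] conjI allI impI)
  have "norm (a,b) / s \<ge> 0" using s by simp
  then show "0 < 1 + norm (a,b) / s" by linarith
  fix p assume p: "p \<notin> W1 \<and> 1 < norm p"
  have d: "dist p (a,b) > 0" using notW1[of p] p s by auto
  have "norm (a,b) / s \<ge> 0" using s by simp
  have "norm p \<le> (1 + norm (a,b) / s) * dist p (a,b)" using norm_le_Cdist p by auto
  then have "1 / dist p (a,b) \<le> (1 + norm (a,b) / s) / norm p"
    using d p by (intro inv_le_quot) auto
  then show "\<bar>f1 p\<bar> \<le> (1 + norm (a,b) / s) / norm p"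
    using d by (simp add: f1_def)
qed

lemma f1_md_gen:
  assumes "\<And>p. p \<notin> W1 \<Longrightarrow> \<bar>g p\<bar> \<le> 1 / dist p (a,b) ^ 2"
  shows "moderate_decrease W1 g"
  unfolding moderate_decrease_def
proof (intro exI[of _ "(1 + norm (a,b) / s)^2"] conjI allI impI)
  have "norm (a,b) / s \<ge> 0" using s by simp
  then have "1 + norm (a,b) / s > 0" by linarith
  then show "0 < (1 + norm (a,b) / s)^2" by simp
  fix p assume p: "p \<notin> W1 \<and> 1 < norm p"
  have d: "dist p (a,b) > 0" using notW1[of p] p s by auto
  have "norm p \<le> (1 + norm (a,b) / s) * dist p (a,b)" using norm_le_Cdist p by auto
  then have "(norm p)^2 \<le> ((1 + norm (a,b) / s) * dist p (a,b))^2"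
    using p by (intro power_mono) auto
  then have "(norm p)^2 \<le> (1 + norm (a,b) / s)^2 * dist p (a,b) ^ 2"
    by (simp add: power_mult_distrib)
  then have "1 / dist p (a,b) ^ 2 \<le> (1 + norm (a,b) / s)^2 / (norm p)^2"
    using d p by (intro inv_le_quot) auto
  then show "\<bar>g p\<bar> \<le> (1 + norm (a,b) / s)^2 / (norm p)^2"
    using assms p by (meson order.trans)
qed

lemma f1_md: "moderate_decrease W1 (dx f1)" "moderate_decrease W1 (dy f1)"
proof -
  show "moderate_decrease W1 (dx f1)"
  proof (rule f1_md_gen)
    fix p assume p: "p \<notin> W1"
    have "dx f1 p = pderivs [True] f1 p" by simp
    also have "\<dots> = -(fst p - fst (a,b)) / dist p (a,b) ^ 3" by (subst f1_pderivs[OF p]) (rule ev1T)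
    finally have eq: "dx f1 p = -(fst p - fst (a,b)) / dist p (a,b) ^ 3" .
    have d: "dist p (a,b) > 0" using notW1[OF p] s by linarith
    show "\<bar>dx f1 p\<bar> \<le> 1 / dist p (a,b) ^ 2"
      unfolding eq by (rule abs_quot3[OF fst_le_dist d])
  qed
  show "moderate_decrease W1 (dy f1)"
  proof (rule f1_md_gen)
    fix p assume p: "p \<notin> W1"
    have "dy f1 p = pderivs [False] f1 p" by simp
    also have "\<dots> = -(snd p - snd (a,b)) / dist p (a,b) ^ 3" by (subst f1_pderivs[OF p]) (rule ev1F)
    finally have eq: "dy f1 p = -(snd p - snd (a,b)) / dist p (a,b) ^ 3" .
    have d: "dist p (a,b) > 0" using notW1[OF p] s by linarith
    show "\<bar>dy f1 p\<bar> \<le> 1 / dist p (a,b) ^ 2"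
      unfolding eq by (rule abs_quot3[OF snd_le_dist d])
  qed
qed

end

lemma holo_real_series:
  fixes H :: "complex \<Rightarrow> complex" and h :: "real \<Rightarrow> real"
  assumes hol: "H holomorphic_on ball 0 r" and r: "r > 0"
  and real: "\<And>t. \<bar>t\<bar> < r \<Longrightarrow> H (of_real t) = of_real (h t)"
  shows "\<exists>c. \<forall>t. \<bar>t\<bar> < r/2 \<longrightarrow> summable (\<lambda>n. \<bar>c n * t^n\<bar>) \<and> (\<lambda>n. c n * t^n) sums h t"
proof -
  define C where "C n = (deriv ^^ n) H 0 / fact n" for n
  have S: "(\<lambda>n. C n * w^n) sums H w" if "w \<in> ball 0 r" for w
    using holomorphic_power_series[OF hol that] by (simp add: C_def)
  have sum34: "summable (\<lambda>n. C n * (of_real (3*r/4))^n)"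
    using S[of "of_real (3*r/4)"] r by (auto simp: sums_iff)
  show ?thesis
  proof (intro exI[of _ "\<lambda>n. Re (C n)"] allI impI conjI)
    fix t :: real assume t: "\<bar>t\<bar> < r/2"
    have "summable (\<lambda>n. norm (C n * (of_real t)^n))"
      by (rule powser_insidea[OF sum34]) (use t r in auto)
    then show "summable (\<lambda>n. \<bar>Re (C n) * t^n\<bar>)"
    proof (rule summable_comparison_test'[where N=0])
      fix n
      have "\<bar>Re (C n) * t^n\<bar> = \<bar>Re (C n)\<bar> * \<bar>t\<bar>^n" by (simp add: abs_mult power_abs)
      also have "\<dots> \<le> norm (C n) * \<bar>t\<bar>^n" by (intro mult_right_mono abs_Re_le_cmod) auto
      also have "\<dots> = norm (C n * (of_real t)^n)" by (simp add: norm_mult norm_power)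
      finally show "norm \<bar>Re (C n) * t^n\<bar> \<le> norm (C n * (of_real t)^n)" by simp
    qed
    have "(\<lambda>n. C n * (of_real t)^n) sums H (of_real t)"
      by (rule S) (use t r in auto)
    from sums_Re[OF this] have "(\<lambda>n. Re (C n * (of_real t)^n)) sums h t"
      using real[of t] t by simp
    moreover have "Re (C n * (of_real t)^n) = Re (C n) * t^n" for n
    proof -
      have "Re (C n * of_real (t^n)) = Re (C n) * t^n" by simp
      then show ?thesis by (metis of_real_power)
    qed
    ultimately show "(\<lambda>n. Re (C n) * t^n) sums h t" by simp
  qed
qed

lemma analytic_from_h:
  fixes g h :: "real \<Rightarrow> real"
  assumes e: "e > 0"
  and c: "\<And>t. \<bar>t\<bar> < e \<Longrightarrow> summable (\<lambda>n. \<bar>c n * t^n\<bar>) \<and> (\<lambda>n. c n * t^n) sums h t"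
  and g: "\<And>t. t \<noteq> 0 \<Longrightarrow> \<bar>t\<bar> < e \<Longrightarrow> g (1/t) = \<bar>t\<bar> * h t"
  shows "analytic_at_infinity V g"
proof -
  have P: "summable (\<lambda>n. \<bar>c n * t ^ Suc n\<bar>) \<and> (\<lambda>n. c n * t ^ Suc n) sums g (1/t)"
    if t: "0 < t" "t < e" for t
  proof
    have ct: "summable (\<lambda>n. \<bar>c n * t^n\<bar>)" "(\<lambda>n. c n * t^n) sums h t" using c[of t] t by auto
    have eq: "\<bar>c n * t ^ Suc n\<bar> = t * \<bar>c n * t^n\<bar>" for n using t by (simp add: abs_mult)
    show "summable (\<lambda>n. \<bar>c n * t ^ Suc n\<bar>)" using summable_mult[OF ct(1), of t] by (simp only: eq)
    have "(\<lambda>n. t * (c n * t^n)) sums (t * h t)" by (rule sums_mult[OF ct(2)])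
    then show "(\<lambda>n. c n * t ^ Suc n) sums g (1/t)" using g[of t] t by (simp add: algebra_simps)
  qed
  have N: "summable (\<lambda>n. \<bar>- c n * t ^ Suc n\<bar>) \<and> (\<lambda>n. - c n * t ^ Suc n) sums g (1/t)"
    if t: "-e < t" "t < 0" for t
  proof
    have ct: "summable (\<lambda>n. \<bar>c n * t^n\<bar>)" "(\<lambda>n. c n * t^n) sums h t" using c[of t] t by auto
    have eq: "\<bar>- c n * t ^ Suc n\<bar> = (-t) * \<bar>c n * t^n\<bar>" for n using t by (simp add: abs_mult)
    show "summable (\<lambda>n. \<bar>- c n * t ^ Suc n\<bar>)" using summable_mult[OF ct(1), of "-t"] by (simp only: eq)
    have "(\<lambda>n. (-t) * (c n * t^n)) sums ((-t) * h t)" by (rule sums_mult[OF ct(2)])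
    then show "(\<lambda>n. - c n * t ^ Suc n) sums g (1/t)" using g[of t] t by (simp add: algebra_simps)
  qed
  show ?thesis unfolding analytic_at_infinity_def
    apply (rule exI[of _ e], rule exI[of _ e], rule exI[of _ c], rule exI[of _ "\<lambda>n. - c n"])
    using P N e by auto
qed


definition Qc :: "real \<Rightarrow> real \<Rightarrow> complex \<Rightarrow> complex" where
  "Qc u v z = 1 - 2 * of_real u * z + of_real v * z^2"

lemma Qc_re:
  assumes "\<bar>u\<bar> \<le> B" "\<bar>v\<bar> \<le> B" "norm z < 1 / (3*B+1)"
  shows "Re (Qc u v z) > 0"
proof -
  have B: "B \<ge> 0" using assms(1) by linarith
  have z1: "norm z < 1" proof -
    have "1 / (3*B+1) \<le> 1" using B by simp
    then show ?thesis using assms(3) by linarith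
  qed
  have "norm (Qc u v z - 1) \<le> norm (2 * of_real u * z) + norm (of_real v * z^2)"
  proof -
    have "Qc u v z - 1 = - (2 * of_real u * z) + of_real v * z^2" unfolding Qc_def by simp
    then show ?thesis using norm_triangle_ineq[of "- (2 * of_real u * z)" "of_real v * z^2"] by simp
  qed
  also have "norm (2 * of_real u * z) \<le> 2 * B * norm z"
    using assms(1) by (simp add: norm_mult mult_right_mono)
  also have "norm (of_real v * z^2) \<le> B * norm z"
  proof -
    have "norm (of_real v * z^2) = \<bar>v\<bar> * (norm z * norm z)" by (simp add: norm_mult norm_power power2_eq_square)
    also have "\<dots> \<le> B * (norm z * 1)"
      using assms(2) z1 by (intro mult_mono) (auto intro: mult_left_mono)
    finally show ?thesis by simp
  qed
  finally have "norm (Qc u v z - 1) \<le> 3 * B * norm z" by simp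
  also have "3 * B * norm z < 1"
  proof -
    have "3 * B * norm z \<le> 3 * B * (1 / (3*B+1))" using assms(3) B by (intro mult_left_mono) auto
    also have "\<dots> < 1" using B by (simp add: field_simps)
    finally show ?thesis .
  qed
  finally have "norm (Qc u v z - 1) < 1" .
  moreover have "Re (Qc u v z - 1) \<ge> - norm (Qc u v z - 1)" using abs_Re_le_cmod[of "Qc u v z - 1"] by linarith
  ultimately show ?thesis by simp
qed

lemma Qc_notin: "Re w > 0 \<Longrightarrow> w \<notin> \<real>\<^sub>\<le>\<^sub>0"
  by (simp add: complex_nonpos_Reals_iff)

lemma Qc_real: "Qc u v (of_real t) = of_real (1 - 2*u*t + v * t^2)"
  by (simp add: Qc_def)

lemma inv_sqrt_scale:
  assumes "t \<noteq> 0"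
  shows "1 / sqrt (X^2 + (1/t - u)^2) = \<bar>t\<bar> * (1 / sqrt (1 - 2*u*t + (u^2 + X^2) * t^2))"
proof -
  have "1 - 2*u*t + (u^2 + X^2) * t^2 = t^2 * (X^2 + (1/t - u)^2)"
    using assms by (simp add: field_simps power2_eq_square)
  then have "sqrt (1 - 2*u*t + (u^2 + X^2) * t^2) = \<bar>t\<bar> * sqrt (X^2 + (1/t - u)^2)"
    by (simp add: real_sqrt_mult)
  then show ?thesis using assms by simp
qed

lemma Qc_holo_inv:
  assumes "\<bar>u\<bar> \<le> B" "\<bar>v\<bar> \<le> B"
  shows "(\<lambda>z. 1 / csqrt (Qc u v z)) holomorphic_on ball 0 (1 / (3*B+1))"
proof -
  have re: "Re (Qc u v z) > 0" if "z \<in> ball 0 (1 / (3*B+1))" for z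
    using Qc_re[OF assms] that by simp
  have hol: "Qc u v holomorphic_on ball 0 (1 / (3*B+1))" unfolding Qc_def by (intro holomorphic_intros)
  have nn: "Qc u v z \<notin> \<real>\<^sub>\<le>\<^sub>0" if "z \<in> ball 0 (1 / (3*B+1))" for z
    using re[OF that] by (rule Qc_notin)
  have ne: "csqrt (Qc u v z) \<noteq> 0" if "z \<in> ball 0 (1 / (3*B+1))" for z
    using re[OF that] by (auto simp: csqrt_eq_0)
  show ?thesis
    by (rule holomorphic_on_divide[OF holomorphic_on_const holomorphic_on_csqrt'[OF hol nn] ne])
qed

lemma inv_sqrt_series:
  fixes u v :: real
  shows "\<exists>e>0. \<exists>c. \<forall>t. \<bar>t\<bar> < e \<longrightarrow> summable (\<lambda>n. \<bar>c n * t^n\<bar>) \<and>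
            (\<lambda>n. c n * t^n) sums (1 / sqrt (1 - 2*u*t + v * t^2))"
proof -
  define B where "B = \<bar>u\<bar> + \<bar>v\<bar>"
  have B: "\<bar>u\<bar> \<le> B" "\<bar>v\<bar> \<le> B" "B \<ge> 0" by (auto simp: B_def)
  define r where "r = 1 / (3*B+1)"
  have r: "r > 0" using B by (simp add: r_def)
  have "\<exists>c. \<forall>t. \<bar>t\<bar> < r/2 \<longrightarrow> summable (\<lambda>n. \<bar>c n * t^n\<bar>) \<and> (\<lambda>n. c n * t^n) sums (1 / sqrt (1 - 2*u*t + v * t^2))"
  proof (rule holo_real_series[OF _ r])
    show "(\<lambda>z. 1 / csqrt (Qc u v z)) holomorphic_on ball 0 r"
      unfolding r_def by (rule Qc_holo_inv[OF B(1,2)])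
    fix t :: real assume t: "\<bar>t\<bar> < r"
    have "Re (Qc u v (of_real t)) > 0" using Qc_re[OF B(1,2)] t by (simp add: r_def)
    then have pos: "1 - 2*u*t + v * t^2 > 0" by (simp add: Qc_real)
    show "1 / csqrt (Qc u v (of_real t)) = of_real (1 / sqrt (1 - 2*u*t + v * t^2))"
      using pos by (simp add: Qc_real csqrt_of_real)
  qed
  then show ?thesis using r by (intro exI[of _ "r/2"]) auto
qed

lemma dist_pair_sqrt: "dist (x, y) (a, b) = sqrt ((x - a)^2 + (y - b)^2)"
  by (simp add: dist_Pair_Pair dist_real_def)

lemma f1_analytic_y:
  "analytic_at_infinity V (\<lambda>y. 1 / dist (x, y) (a::real, b::real))"
proof -
  obtain e c where e: "e > 0" and c: "\<And>t. \<bar>t\<bar> < e \<Longrightarrow> summable (\<lambda>n. \<bar>c n * t^n\<bar>) \<and>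
      (\<lambda>n. c n * t^n) sums (1 / sqrt (1 - 2*b*t + (b^2 + (x-a)^2) * t^2))"
    using inv_sqrt_series[of b "b^2 + (x-a)^2"] by blast
  show ?thesis
  proof (rule analytic_from_h[OF e c])
    fix t :: real assume "t \<noteq> 0"
    then show "1 / dist (x, 1/t) (a, b) = \<bar>t\<bar> * (1 / sqrt (1 - 2*b*t + (b^2 + (x-a)^2) * t^2))"
      using inv_sqrt_scale[of t "x - a" b] by (simp add: dist_pair_sqrt)
  qed
qed

lemma f1_analytic_x:
  "analytic_at_infinity V (\<lambda>x. 1 / dist (x, y) (a::real, b::real))"
proof -
  obtain e c where e: "e > 0" and c: "\<And>t. \<bar>t\<bar> < e \<Longrightarrow> summable (\<lambda>n. \<bar>c n * t^n\<bar>) \<and>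
      (\<lambda>n. c n * t^n) sums (1 / sqrt (1 - 2*a*t + (a^2 + (y-b)^2) * t^2))"
    using inv_sqrt_series[of a "a^2 + (y-b)^2"] by blast
  show ?thesis
  proof (rule analytic_from_h[OF e c])
    fix t :: real assume "t \<noteq> 0"
    then show "1 / dist (1/t, y) (a, b) = \<bar>t\<bar> * (1 / sqrt (1 - 2*a*t + (a^2 + (y-b)^2) * t^2))"
      using inv_sqrt_scale[of t "y - b" a] by (simp add: dist_pair_sqrt add.commute)
  qed
qed

lemma part1: "s > 0 \<Longrightarrow> normal (cball (a,b) s) (\<lambda>p. 1 / dist p (a,b))"
proof -
  assume s: "s > 0"
  have W: "cball (a,b) s = W1 a b s" using W1_def[OF s] by simp
  have F: "(\<lambda>p. 1 / dist p (a,b)) = f1 a b" using f1_def[OF s] by simp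
  show ?thesis unfolding W F normal_def basic_conditions_def
  proof (intro conjI)
    show "closed (W1 a b s)" "bounded (W1 a b s)" by (simp_all add: W1_def[OF s])
    show "smooth_on (- W1 a b s) (f1 a b)" by (rule f1_smooth[OF s])
    show "\<forall>x. analytic_at_infinity {y. (x, y) \<in> W1 a b s} (\<lambda>y. f1 a b (x, y))"
      using f1_analytic_y by (simp add: f1_def[OF s])
    show "\<forall>y. analytic_at_infinity {x. (x, y) \<in> W1 a b s} (\<lambda>x. f1 a b (x, y))"
      using f1_analytic_x by (simp add: f1_def[OF s])
    show "very_moderate_decrease (W1 a b s) (f1 a b)" by (rule f1_vmd[OF s])
    show "moderate_decrease (W1 a b s) (dx (f1 a b))" "moderate_decrease (W1 a b s) (dy (f1 a b))"
      by (rule f1_md[OF s])+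
    show "\<exists>N. \<forall>k\<le>2. \<forall>c. finite (zeros_x (W1 a b s) (f1 a b) k c) \<and> card (zeros_x (W1 a b s) (f1 a b) k c) \<le> N \<and>
        finite (zeros_y (W1 a b s) (f1 a b) k c) \<and> card (zeros_y (W1 a b s) (f1 a b) k c) \<le> N"
      using f1_zeros_x[OF s] f1_zeros_y[OF s] by blast
  qed
qed

lemma norm_pair_le: "norm (a::real, b::real) \<le> \<bar>a\<bar> + \<bar>b\<bar>"
  using norm_triangle_ineq[of "(a,0)" "(0::real,b)"] by (simp add: norm_Pair)

lemma norm_pair_ge1: "\<bar>a\<bar> \<le> norm (a::real, b::real)"
  using real_sqrt_ge_abs1[of a b] by (simp add: norm_Pair)
lemma norm_pair_ge2: "\<bar>b\<bar> \<le> norm (a::real, b::real)"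
  using real_sqrt_ge_abs2[of b a] by (simp add: norm_Pair)

locale pot =
  fixes \<rho> :: "real\<times>real \<Rightarrow> real" and B :: real
  assumes cont: "continuous_on UNIV \<rho>" and Bpos: "B > 0"
  and supp: "\<And>q. \<rho> q \<noteq> 0 \<Longrightarrow> \<bar>fst q\<bar> < B \<and> \<bar>snd q\<bar> < B"
begin

definition "Cb = cbox (-B,-B) (B,B)"
definition "W2 = cball (0::real\<times>real) (2*B+1)"
definition "Fe e p = integral Cb (\<lambda>q. \<rho> q * ev e p q)"

lemma Cb_mem: "q \<in> Cb \<longleftrightarrow> \<bar>fst q\<bar> \<le> B \<and> \<bar>snd q\<bar> \<le> B"
  by (cases q) (auto simp: Cb_def cbox_Pair_eq abs_le_iff)

lemma norm_Cb: "q \<in> Cb \<Longrightarrow> norm q \<le> 2*B"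
  using norm_pair_le[of "fst q" "snd q"] by (auto simp: Cb_mem)

lemma notW2: "p \<notin> W2 \<longleftrightarrow> norm p > 2*B+1"
  by (auto simp: W2_def)

lemma far:
  assumes "p \<notin> W2" "q \<in> Cb"
  shows "dist p q > 1" "norm p \<le> (2*B+1) * dist p q" "p \<noteq> q"
proof -
  have np: "norm p > 2*B+1" using assms(1) notW2 by blast
  have nq: "norm q \<le> 2*B" using norm_Cb[OF assms(2)] .
  have d: "dist p q \<ge> norm p - norm q" using norm_triangle_ineq2[of p q] by (simp add: dist_norm)
  show "dist p q > 1" using np nq d by linarith
  have "(2*B+1) * (norm p - 2*B) - norm p = 2*B * (norm p - (2*B+1))" by (simp add: algebra_simps)
  also have "\<dots> \<ge> 0" using np Bpos by simp
  finally have "norm p \<le> (2*B+1) * (norm p - 2*B)" by simp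
  also have "\<dots> \<le> (2*B+1) * dist p q" using d nq Bpos by (intro mult_left_mono) auto
  finally show "norm p \<le> (2*B+1) * dist p q" .
  show "p \<noteq> q" using \<open>dist p q > 1\<close> by auto
qed

lemma rho_out: "q \<notin> Cb \<Longrightarrow> \<rho> q = 0"
  by (meson Cb_mem less_imp_le supp)

lemma pot_eq: "potential \<rho> p = Fe Iv p"
proof -
  have "(\<lambda>q. \<rho> q / dist p q) = (\<lambda>q. if q \<in> Cb then \<rho> q * ev Iv p q else 0)"
    using rho_out by (auto simp: fun_eq_iff)
  then show ?thesis by (simp add: potential_def Fe_def integral_restrict_UNIV)
qed

lemma ev_cont_p: "p \<notin> W2 \<Longrightarrow> continuous_on Cb (\<lambda>q. ev e p q)"
proof -
  assume p: "p \<notin> W2"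
  have "continuous_on Cb (\<lambda>q. ev e (fst (p,q)) (snd (p,q)))"
    by (rule continuous_on_compose2[OF ev_cont[of e]]) (use far(3)[OF p] in \<open>force intro!: continuous_intros\<close>)+
  then show ?thesis by simp
qed

lemma rho_cont: "continuous_on S \<rho>"
  using cont continuous_on_subset by blast

lemma int_p: "p \<notin> W2 \<Longrightarrow> (\<lambda>q. \<rho> q * ev e p q) integrable_on Cb"
  unfolding Cb_def by (rule integrable_continuous) (auto intro!: continuous_intros rho_cont ev_cont_p simp: Cb_def[symmetric])

lemma Fe_deriv:
  assumes p0: "p0 \<notin> W2"
  shows "(Fe e has_derivative (\<lambda>h. fst h * Fe (dd True e) p0 + snd h * Fe (dd False e) p0)) (at p0)"
proof -
  define \<delta> where "\<delta> = norm p0 - (2*B+1)"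
  have \<delta>: "\<delta> > 0" using p0 notW2 by (simp add: \<delta>_def)
  define U where "U = ball p0 \<delta>"
  have UW: "p \<notin> W2" if "p \<in> U" for p
  proof -
    have "norm p0 - norm p \<le> dist p0 p" using norm_triangle_ineq2[of p0 p] by (simp add: dist_norm)
    then show ?thesis using that by (auto simp: U_def notW2 \<delta>_def)
  qed
  have sub: "U \<times> Cb \<subseteq> {z. fst z \<noteq> snd z}"
  proof
    fix z assume "z \<in> U \<times> Cb"
    then show "z \<in> {z. fst z \<noteq> snd z}" using far(3)[OF UW[of "fst z"], of "snd z"] by (auto simp: mem_Times_iff)
  qed
  have gc: "continuous_on (U \<times> Cb) (\<lambda>z. ev e' (fst z) (snd z))" for e'
    by (rule continuous_on_subset[OF ev_cont sub])
  have L: "((\<lambda>p. integral (cbox (-B,-B) (B,B)) (\<lambda>q. \<rho> q * ev e p q)) has_derivative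
      blinfun_apply (integral (cbox (-B,-B) (B,B)) (\<lambda>q. blinfun_inner_left (\<rho> q *\<^sub>R grad e p0 q)))) (at p0 within U)"
  proof (rule leibniz_rule[where fx = "\<lambda>p q. blinfun_inner_left (\<rho> q *\<^sub>R grad e p q)"])
    fix p q assume p: "p \<in> U" and q: "q \<in> cbox (-B,-B) (B,B)"
    have "p \<noteq> q" using far(3)[OF UW[OF p]] q by (simp add: Cb_def)
    from has_derivative_mult_right[OF ev_deriv[OF this, of e], of "\<rho> q"]
    have "((\<lambda>p. \<rho> q * ev e p q) has_derivative (\<lambda>h. \<rho> q * (h \<bullet> grad e p q))) (at p)" .
    then have "((\<lambda>p. \<rho> q * ev e p q) has_derivative blinfun_apply (blinfun_inner_left (\<rho> q *\<^sub>R grad e p q))) (at p)"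
      by (simp add: inner_scaleR_right)
    then show "((\<lambda>p. \<rho> q * ev e p q) has_derivative blinfun_apply (blinfun_inner_left (\<rho> q *\<^sub>R grad e p q))) (at p within U)"
      by (rule has_derivative_at_withinI)
  next
    fix p assume "p \<in> U"
    then show "(\<lambda>q. \<rho> q * ev e p q) integrable_on cbox (-B,-B) (B,B)" using int_p UW by (simp add: Cb_def)
  next
    show "continuous_on (U \<times> cbox (-B,-B) (B,B)) (\<lambda>(p, q). blinfun_inner_left (\<rho> q *\<^sub>R grad e p q))"
      unfolding split_beta grad_def Cb_def[symmetric]
      by (intro bounded_linear.continuous_on[OF bounded_linear_blinfun_inner_left] continuous_intros gc
          continuous_on_compose2[OF cont, of _ snd] ) auto
  next
    show "p0 \<in> U" using \<delta> by (simp add: U_def)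
    show "convex U" by (simp add: U_def)
  qed
  have atU: "at p0 within U = at p0" by (rule at_within_open) (use \<delta> in \<open>auto simp: U_def\<close>)
  have ig: "(\<lambda>q. \<rho> q * ev e' p0 q) integrable_on Cb" for e' by (rule int_p[OF p0])
  have "blinfun_apply (integral Cb (\<lambda>q. blinfun_inner_left (\<rho> q *\<^sub>R grad e p0 q))) h
      = fst h * Fe (dd True e) p0 + snd h * Fe (dd False e) p0" for h
  proof -
    have ib: "(\<lambda>q. blinfun_inner_left (\<rho> q *\<^sub>R grad e p0 q)) integrable_on Cb"
      unfolding Cb_def grad_def
      by (rule integrable_continuous)
         (intro bounded_linear.continuous_on[OF bounded_linear_blinfun_inner_left] continuous_intros rho_cont
          ev_cont_p[OF p0, unfolded Cb_def])
    have "blinfun_apply (integral Cb (\<lambda>q. blinfun_inner_left (\<rho> q *\<^sub>R grad e p0 q))) h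
        = integral Cb (\<lambda>q. fst h * (\<rho> q * ev (dd True e) p0 q) + snd h * (\<rho> q * ev (dd False e) p0 q))"
      by (subst blinfun_apply_integral[OF ib]) (simp add: grad_def inner_pair_real algebra_simps)
    also have "\<dots> = fst h * Fe (dd True e) p0 + snd h * Fe (dd False e) p0"
      unfolding Fe_def
      by (subst integral_add) (auto intro: integrable_on_mult_right ig simp: integral_mult)
    finally show ?thesis .
  qed
  then have "blinfun_apply (integral Cb (\<lambda>q. blinfun_inner_left (\<rho> q *\<^sub>R grad e p0 q)))
      = (\<lambda>h. fst h * Fe (dd True e) p0 + snd h * Fe (dd False e) p0)" by auto
  with L atU show ?thesis by (simp add: Fe_def[abs_def] Cb_def)
qed

lemma Fe_pderivs: "p \<notin> W2 \<Longrightarrow> pderivs ds (potential \<rho>) p = Fe (ddl ds Iv) p"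
  by (rule pderivs_family[where \<Phi> = Fe and S = "- W2"]) (auto simp: W2_def pot_eq intro: Fe_deriv)

lemma Fe_smooth: "smooth_on (- W2) (potential \<rho>)"
  by (rule smooth_family[where \<Phi> = Fe and ee = Iv]) (auto simp: W2_def pot_eq intro: Fe_deriv)

end

context pot
begin

definition "Mr = integral Cb (\<lambda>q. \<bar>\<rho> q\<bar>)"

lemma abs_rho_int: "(\<lambda>q. \<bar>\<rho> q\<bar>) integrable_on Cb"
  unfolding Cb_def by (rule integrable_continuous) (auto intro!: continuous_intros rho_cont)

lemma Mr_nonneg: "Mr \<ge> 0"
  unfolding Mr_def by (rule integral_nonneg[OF abs_rho_int]) auto

lemma Fe_bound:
  assumes p: "p \<notin> W2" and K: "\<And>q. q \<in> Cb \<Longrightarrow> \<bar>ev e p q\<bar> \<le> K"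
  shows "\<bar>Fe e p\<bar> \<le> K * Mr"
proof -
  have "norm (integral Cb (\<lambda>q. \<rho> q * ev e p q)) \<le> integral Cb (\<lambda>q. K * \<bar>\<rho> q\<bar>)"
  proof (rule integral_norm_bound_integral)
    show "(\<lambda>q. \<rho> q * ev e p q) integrable_on Cb" by (rule int_p[OF p])
    show "(\<lambda>q. K * \<bar>\<rho> q\<bar>) integrable_on Cb" by (intro integrable_on_mult_right abs_rho_int)
    fix q assume q: "q \<in> Cb"
    have "\<bar>\<rho> q * ev e p q\<bar> = \<bar>ev e p q\<bar> * \<bar>\<rho> q\<bar>" by (simp add: abs_mult)
    also have "\<dots> \<le> K * \<bar>\<rho> q\<bar>" by (intro mult_right_mono K q) auto
    finally show "norm (\<rho> q * ev e p q) \<le> K * \<bar>\<rho> q\<bar>" by simp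
  qed
  also have "\<dots> = K * Mr" by (simp add: Mr_def)
  finally show ?thesis by (simp add: Fe_def)
qed

lemma pot_vmd: "very_moderate_decrease W2 (potential \<rho>)"
  unfolding very_moderate_decrease_def
proof (intro exI[of _ "(2*B+1) * Mr + 1"] conjI allI impI)
  show "0 < (2*B+1) * Mr + 1" using Bpos Mr_nonneg by (simp add: add_nonneg_pos)
  fix p assume p: "p \<notin> W2 \<and> 1 < norm p"
  have "\<bar>Fe Iv p\<bar> \<le> ((2*B+1) / norm p) * Mr"
  proof (rule Fe_bound)
    show "p \<notin> W2" using p by simp
    fix q assume q: "q \<in> Cb"
    have "1 / dist p q \<le> (2*B+1) / norm p"
      by (rule inv_le_quot) (use far[OF _ q] p in auto)
    then show "\<bar>ev Iv p q\<bar> \<le> (2*B+1) / norm p" by simp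
  qed
  also have "\<dots> \<le> ((2*B+1) * Mr + 1) / norm p"
    using p by (simp add: divide_right_mono)
  finally show "\<bar>potential \<rho> p\<bar> \<le> ((2*B+1) * Mr + 1) / norm p" by (simp add: pot_eq)
qed

lemma pot_md_gen:
  assumes "\<And>p q. p \<notin> W2 \<Longrightarrow> q \<in> Cb \<Longrightarrow> \<bar>ev e p q\<bar> \<le> 1 / dist p q ^ 2"
  and "\<And>p. p \<notin> W2 \<Longrightarrow> g p = Fe e p"
  shows "moderate_decrease W2 g"
  unfolding moderate_decrease_def
proof (intro exI[of _ "(2*B+1)^2 * Mr + 1"] conjI allI impI)
  show "0 < (2*B+1)^2 * Mr + 1" using Bpos Mr_nonneg by (simp add: add_nonneg_pos)
  fix p assume p: "p \<notin> W2 \<and> 1 < norm p"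
  have "\<bar>Fe e p\<bar> \<le> ((2*B+1)^2 / (norm p)^2) * Mr"
  proof (rule Fe_bound)
    show "p \<notin> W2" using p by simp
    fix q assume q: "q \<in> Cb"
    have d: "dist p q > 0" using far(1)[OF _ q] p by (meson less_trans zero_less_one)
    have "norm p \<le> (2*B+1) * dist p q" using far(2)[OF _ q] p by auto
    then have "(norm p)^2 \<le> ((2*B+1) * dist p q)^2" using p by (intro power_mono) auto
    then have "(norm p)^2 \<le> (2*B+1)^2 * dist p q ^ 2" by (simp add: power_mult_distrib)
    then have "1 / dist p q ^ 2 \<le> (2*B+1)^2 / (norm p)^2"
      by (rule inv_le_quot[rotated 2]) (use d p in auto)
    moreover have "\<bar>ev e p q\<bar> \<le> 1 / dist p q ^ 2" using assms(1)[of p q] p q by auto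
    ultimately show "\<bar>ev e p q\<bar> \<le> (2*B+1)^2 / (norm p)^2" by linarith
  qed
  also have "\<dots> \<le> ((2*B+1)^2 * Mr + 1) / (norm p)^2"
    using p by (simp add: divide_right_mono)
  finally show "\<bar>g p\<bar> \<le> ((2*B+1)^2 * Mr + 1) / (norm p)^2" using assms(2) p by simp
qed

lemma pot_md: "moderate_decrease W2 (dx (potential \<rho>))" "moderate_decrease W2 (dy (potential \<rho>))"
proof -
  show "moderate_decrease W2 (dx (potential \<rho>))"
  proof (rule pot_md_gen[where e = "ddl [True] Iv"])
    fix p q assume p: "p \<notin> W2" and q: "q \<in> Cb"
    have d: "dist p q > 0" using far(1)[OF p q] by linarith
    show "\<bar>ev (ddl [True] Iv) p q\<bar> \<le> 1 / dist p q ^ 2"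
      unfolding ev1T by (rule abs_quot3[OF fst_le_dist d])
  next
    fix p assume "p \<notin> W2"
    then show "dx (potential \<rho>) p = Fe (ddl [True] Iv) p" using Fe_pderivs[of p "[True]"] by simp
  qed
  show "moderate_decrease W2 (dy (potential \<rho>))"
  proof (rule pot_md_gen[where e = "ddl [False] Iv"])
    fix p q assume p: "p \<notin> W2" and q: "q \<in> Cb"
    have d: "dist p q > 0" using far(1)[OF p q] by linarith
    show "\<bar>ev (ddl [False] Iv) p q\<bar> \<le> 1 / dist p q ^ 2"
      unfolding ev1F by (rule abs_quot3[OF snd_le_dist d])
  next
    fix p assume "p \<notin> W2"
    then show "dy (potential \<rho>) p = Fe (ddl [False] Iv) p" using Fe_pderivs[of p "[False]"] by simp
  qed
qed

end

definition Qd :: "real \<Rightarrow> real \<Rightarrow> real \<Rightarrow> complex \<Rightarrow> complex" where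
  "Qd u v c z = - (of_real c * ((2 * of_real v * z - 2 * of_real u) / (2 * csqrt (Qc u v z)))) / (csqrt (Qc u v z))^2"

lemma Qd_deriv:
  assumes "Re (Qc u v z) > 0"
  shows "((\<lambda>z. of_real c / csqrt (Qc u v z)) has_field_derivative Qd u v c z) (at z within S)"
proof -
  have nn: "Qc u v z \<notin> \<real>\<^sub>\<le>\<^sub>0" by (rule Qc_notin[OF assms])
  have ne: "csqrt (Qc u v z) \<noteq> 0" using assms by (auto simp: csqrt_eq_0)
  have Q: "(Qc u v has_field_derivative (2 * of_real v * z - 2 * of_real u)) (at z within S)"
    unfolding Qc_def by (auto intro!: derivative_eq_intros)
  show ?thesis
    unfolding Qd_def
    by (rule derivative_eq_intros has_field_derivative_csqrt'[OF Q nn] ne refl | simp add: ne power2_eq_square)+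
qed

lemma continuous_on_csqrt_comp:
  assumes "continuous_on S f" "\<And>x. x \<in> S \<Longrightarrow> f x \<notin> \<real>\<^sub>\<le>\<^sub>0"
  shows "continuous_on S (\<lambda>x. csqrt (f x))"
  by (rule continuous_on_compose2[OF continuous_on_csqrt assms(1)]) (use assms(2) in auto)

lemma Qc_cont: "continuous_on S (\<lambda>x. Qc (u x) (v x) (z x))" if "continuous_on S u" "continuous_on S v" "continuous_on S z"
  unfolding Qc_def by (intro continuous_intros that)

context pot
begin

lemma H_holo:
  assumes uc: "continuous_on Cb u" and vc: "continuous_on Cb v"
  and bd: "\<And>q. q \<in> Cb \<Longrightarrow> \<bar>u q\<bar> \<le> Bm \<and> \<bar>v q\<bar> \<le> Bm"
  shows "(\<lambda>z. integral Cb (\<lambda>q. of_real (\<rho> q) / csqrt (Qc (u q) (v q) z))) holomorphic_on ball 0 (1/(3*Bm+1))"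
proof -
  let ?U = "ball (0::complex) (1/(3*Bm+1))"
  have re: "Re (Qc (u q) (v q) z) > 0" if "z \<in> ?U" "q \<in> Cb" for z q
    using Qc_re[of "u q" Bm "v q" z] bd[OF that(2)] that(1) by auto
  have sub: "continuous_on (?U \<times> Cb) (\<lambda>x. u' (snd x))" if "continuous_on Cb u'" for u' :: "real\<times>real \<Rightarrow> real"
    by (rule continuous_on_compose2[OF that continuous_on_snd]) auto
  have D: "((\<lambda>z. integral (cbox (-B,-B) (B,B)) (\<lambda>q. of_real (\<rho> q) / csqrt (Qc (u q) (v q) z))) has_field_derivative
       integral (cbox (-B,-B) (B,B)) (\<lambda>q. Qd (u q) (v q) (\<rho> q) z0)) (at z0 within ?U)" if z0: "z0 \<in> ?U" for z0
  proof (rule leibniz_rule_field_derivative)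
    fix z q assume "z \<in> ?U" "q \<in> cbox (-B,-B) (B,B)"
    then show "((\<lambda>z. of_real (\<rho> q) / csqrt (Qc (u q) (v q) z)) has_field_derivative Qd (u q) (v q) (\<rho> q) z) (at z within ?U)"
      using Qd_deriv re by (simp add: Cb_def)
  next
    fix z assume z: "z \<in> ?U"
    have nnq: "Qc (u q) (v q) z \<notin> \<real>\<^sub>\<le>\<^sub>0" if "q \<in> Cb" for q using Qc_notin re[OF z that] by blast
    have neq: "csqrt (Qc (u q) (v q) z) \<noteq> 0" if "q \<in> Cb" for q
    proof
      assume "csqrt (Qc (u q) (v q) z) = 0"
      then have "Qc (u q) (v q) z = 0" by (simp add: csqrt_eq_0)
      then show False using re[OF z that] by simp
    qed
    have c1: "continuous_on Cb (\<lambda>q. csqrt (Qc (u q) (v q) z))"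
      by (intro continuous_on_csqrt_comp Qc_cont uc vc continuous_on_const nnq)
    have "continuous_on Cb (\<lambda>q. of_real (\<rho> q) / csqrt (Qc (u q) (v q) z))"
      by (intro continuous_on_divide c1 continuous_on_of_real rho_cont) (use neq in blast)
    then show "(\<lambda>q. of_real (\<rho> q) / csqrt (Qc (u q) (v q) z)) integrable_on cbox (-B,-B) (B,B)"
      unfolding Cb_def by (rule integrable_continuous)
  next
    have Qne: "Qc (u q) (v q) z \<noteq> 0" if "cmod z < 1/(3*Bm+1)" "q \<in> Cb" for z q
      using re[of z q] that by fastforce
    have nnq: "Qc (u (snd x)) (v (snd x)) (fst x) \<notin> \<real>\<^sub>\<le>\<^sub>0" if "x \<in> ?U \<times> Cb" for x
      using Qc_notin re that by (auto simp: mem_Times_iff)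
    have neq: "csqrt (Qc (u (snd x)) (v (snd x)) (fst x)) \<noteq> 0" if "x \<in> ?U \<times> Cb" for x
    proof
      assume "csqrt (Qc (u (snd x)) (v (snd x)) (fst x)) = 0"
      then have "Qc (u (snd x)) (v (snd x)) (fst x) = 0" by (simp add: csqrt_eq_0)
      then show False using re[of "fst x" "snd x"] that by (auto simp: mem_Times_iff)
    qed
    have c1: "continuous_on (?U \<times> Cb) (\<lambda>x. csqrt (Qc (u (snd x)) (v (snd x)) (fst x)))"
      by (intro continuous_on_csqrt_comp Qc_cont sub uc vc continuous_on_fst continuous_on_id nnq)
    have c2: "continuous_on (?U \<times> Cb) (\<lambda>x. Qc (u (snd x)) (v (snd x)) (fst x))"
      by (intro Qc_cont sub uc vc continuous_on_fst continuous_on_id)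
    have c3: "continuous_on (?U \<times> Cb) (\<lambda>x. of_real (\<rho> (snd x)) :: complex)"
      by (intro continuous_on_of_real sub rho_cont)
    have c4: "continuous_on (?U \<times> Cb) (\<lambda>x. of_real (u (snd x)) :: complex)" "continuous_on (?U \<times> Cb) (\<lambda>x. of_real (v (snd x)) :: complex)"
      by (intro continuous_on_of_real sub uc vc)+
    have "continuous_on (?U \<times> Cb) (\<lambda>x. Qd (u (snd x)) (v (snd x)) (\<rho> (snd x)) (fst x))"
      unfolding Qd_def
      by (intro continuous_on_divide continuous_on_minus continuous_on_mult c1 c3 c4 continuous_on_diff continuous_on_const
          continuous_on_fst continuous_on_id continuous_on_power neq power_not_zero) (use Qne in auto)
    then show "continuous_on (?U \<times> cbox (-B,-B) (B,B)) (\<lambda>(z, q). Qd (u q) (v q) (\<rho> q) z)"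
      unfolding Cb_def[symmetric] split_beta .
  qed (use z0 in auto)
  show ?thesis
  proof (subst holomorphic_on_open, simp, intro ballI)
    fix z0 assume "z0 \<in> ?U"
    with D[OF this] show "\<exists>f'. ((\<lambda>z. integral Cb (\<lambda>q. of_real (\<rho> q) / csqrt (Qc (u q) (v q) z))) has_field_derivative f') (at z0)"
      by (auto simp: Cb_def at_within_open[of z0 ?U])
  qed
qed

lemma pot_analytic_gen:
  assumes uc: "continuous_on Cb u" and Xc: "continuous_on Cb X"
  and bd: "\<And>q. q \<in> Cb \<Longrightarrow> \<bar>u q\<bar> \<le> Bm \<and> \<bar>u q ^ 2 + X q ^ 2\<bar> \<le> Bm" and Bm: "Bm \<ge> 0"
  and g: "\<And>t. t \<noteq> 0 \<Longrightarrow> g (1/t) = integral Cb (\<lambda>q. \<rho> q * (1 / sqrt (X q ^ 2 + (1/t - u q)^2)))"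
  shows "analytic_at_infinity V g"
proof -
  define v where "v q = u q ^ 2 + X q ^ 2" for q
  have vc: "continuous_on Cb v" unfolding v_def by (intro continuous_intros uc Xc)
  have bd': "\<bar>u q\<bar> \<le> Bm \<and> \<bar>v q\<bar> \<le> Bm" if "q \<in> Cb" for q using bd[OF that] by (simp add: v_def)
  define h where "h t = integral Cb (\<lambda>q. \<rho> q * (1 / sqrt (1 - 2 * u q * t + v q * t^2)))" for t
  define r where "r = 1/(3*Bm+1)"
  have r: "r > 0" using Bm by (simp add: r_def)
  have "\<exists>c. \<forall>t. \<bar>t\<bar> < r/2 \<longrightarrow> summable (\<lambda>n. \<bar>c n * t^n\<bar>) \<and> (\<lambda>n. c n * t^n) sums h t"
  proof (rule holo_real_series[OF _ r])
    show "(\<lambda>z. integral Cb (\<lambda>q. of_real (\<rho> q) / csqrt (Qc (u q) (v q) z))) holomorphic_on ball 0 r"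
      unfolding r_def by (rule H_holo[OF uc vc bd'])
    fix t :: real assume t: "\<bar>t\<bar> < r"
    have pos: "1 - 2 * u q * t + v q * t^2 > 0" if "q \<in> Cb" for q
    proof -
      have "Re (Qc (u q) (v q) (of_real t)) > 0"
        using Qc_re[of "u q" Bm "v q" "of_real t"] bd'[OF that] t by (simp add: r_def)
      then show ?thesis by (simp add: Qc_real)
    qed
    have eq: "of_real (\<rho> q) / csqrt (Qc (u q) (v q) (of_real t)) = of_real (\<rho> q * (1 / sqrt (1 - 2 * u q * t + v q * t^2)))"
      if "q \<in> Cb" for q
      using pos[OF that] by (simp add: Qc_real csqrt_of_real)
    have ct: "continuous_on Cb (\<lambda>q. \<rho> q * (1 / sqrt (1 - 2 * u q * t + v q * t^2)))"
      by (intro continuous_intros rho_cont uc vc) (use pos in force)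
    have int: "(\<lambda>q. \<rho> q * (1 / sqrt (1 - 2 * u q * t + v q * t^2))) integrable_on Cb"
      using ct unfolding Cb_def by (rule integrable_continuous)
    have "integral Cb (\<lambda>q. of_real (\<rho> q) / csqrt (Qc (u q) (v q) (of_real t)))
        = integral Cb (\<lambda>q. of_real (\<rho> q * (1 / sqrt (1 - 2 * u q * t + v q * t^2))) :: complex)"
      by (rule integral_cong) (rule eq)
    also have "\<dots> = of_real (h t)"
      unfolding h_def by (rule integral_unique[OF has_integral_of_real[OF integrable_integral[OF int]]])
    finally show "integral Cb (\<lambda>q. of_real (\<rho> q) / csqrt (Qc (u q) (v q) (of_real t))) = of_real (h t)" .
  qed
  then obtain c where c: "\<And>t. \<bar>t\<bar> < r/2 \<Longrightarrow> summable (\<lambda>n. \<bar>c n * t^n\<bar>) \<and> (\<lambda>n. c n * t^n) sums h t"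
    by blast
  show ?thesis
  proof (rule analytic_from_h[OF _ c])
    show "r/2 > 0" using r by simp
    fix t :: real assume t: "t \<noteq> 0"
    have "g (1/t) = integral Cb (\<lambda>q. \<rho> q * (\<bar>t\<bar> * (1 / sqrt (1 - 2 * u q * t + (u q ^ 2 + X q ^ 2) * t^2))))"
      unfolding g[OF t] using inv_sqrt_scale[OF t] by simp
    also have "\<dots> = integral Cb (\<lambda>q. \<bar>t\<bar> *\<^sub>R (\<rho> q * (1 / sqrt (1 - 2 * u q * t + v q * t^2))))"
      unfolding v_def by (rule integral_cong) (simp add: algebra_simps)
    also have "\<dots> = \<bar>t\<bar> * h t"
      unfolding h_def integral_cmul by simp
    finally show "g (1/t) = \<bar>t\<bar> * h t" .
  qed
qed

lemma pot_analytic: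
  "analytic_at_infinity V (\<lambda>y. potential \<rho> (x, y))"
  "analytic_at_infinity V (\<lambda>x. potential \<rho> (x, y))"
proof -
  show "analytic_at_infinity V (\<lambda>y. potential \<rho> (x, y))"
  proof (rule pot_analytic_gen[where u = snd and X = "\<lambda>q. x - fst q" and Bm = "B + B^2 + (\<bar>x\<bar> + B)^2"])
    show "continuous_on Cb snd" "continuous_on Cb (\<lambda>q. x - fst q)" by (intro continuous_intros)+
    show "0 \<le> B + B^2 + (\<bar>x\<bar> + B)^2" using Bpos by simp
    fix q assume q: "q \<in> Cb"
    then have q1: "\<bar>fst q\<bar> \<le> B" and q2: "\<bar>snd q\<bar> \<le> B" by (auto simp: Cb_mem)
    have "\<bar>x - fst q\<bar> \<le> \<bar>x\<bar> + B" using q1 by linarith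
    then have a: "(x - fst q)^2 \<le> (\<bar>x\<bar> + B)^2" by (metis abs_ge_zero order.trans power2_abs power_mono)
    have b: "(snd q)^2 \<le> B^2" using q2 by (metis abs_ge_zero power2_abs power_mono)
    show "\<bar>snd q\<bar> \<le> B + B^2 + (\<bar>x\<bar> + B)^2 \<and> \<bar>snd q ^ 2 + (x - fst q) ^ 2\<bar> \<le> B + B^2 + (\<bar>x\<bar> + B)^2"
    proof
      have "0 \<le> B^2" "0 \<le> (\<bar>x\<bar> + B)^2" by simp_all
      then show "\<bar>snd q\<bar> \<le> B + B^2 + (\<bar>x\<bar> + B)^2" using q2 by linarith
      have "0 \<le> snd q ^ 2 + (x - fst q) ^ 2" by simp
      then show "\<bar>snd q ^ 2 + (x - fst q) ^ 2\<bar> \<le> B + B^2 + (\<bar>x\<bar> + B)^2" using a b Bpos by simp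
    qed
  next
    fix t :: real assume "t \<noteq> 0"
    show "potential \<rho> (x, 1/t) = integral Cb (\<lambda>q. \<rho> q * (1 / sqrt ((x - fst q)^2 + (1/t - snd q)^2)))"
      by (simp add: pot_eq Fe_def dist_pair_sqrt[symmetric])
  qed
  show "analytic_at_infinity V (\<lambda>x. potential \<rho> (x, y))"
  proof (rule pot_analytic_gen[where u = fst and X = "\<lambda>q. y - snd q" and Bm = "B + B^2 + (\<bar>y\<bar> + B)^2"])
    show "continuous_on Cb fst" "continuous_on Cb (\<lambda>q. y - snd q)" by (intro continuous_intros)+
    show "0 \<le> B + B^2 + (\<bar>y\<bar> + B)^2" using Bpos by simp
    fix q assume q: "q \<in> Cb"
    then have q1: "\<bar>fst q\<bar> \<le> B" and q2: "\<bar>snd q\<bar> \<le> B" by (auto simp: Cb_mem)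
    have "\<bar>y - snd q\<bar> \<le> \<bar>y\<bar> + B" using q2 by linarith
    then have a: "(y - snd q)^2 \<le> (\<bar>y\<bar> + B)^2" by (metis abs_ge_zero order.trans power2_abs power_mono)
    have b: "(fst q)^2 \<le> B^2" using q1 by (metis abs_ge_zero power2_abs power_mono)
    show "\<bar>fst q\<bar> \<le> B + B^2 + (\<bar>y\<bar> + B)^2 \<and> \<bar>fst q ^ 2 + (y - snd q) ^ 2\<bar> \<le> B + B^2 + (\<bar>y\<bar> + B)^2"
    proof
      have "0 \<le> B^2" "0 \<le> (\<bar>y\<bar> + B)^2" by simp_all
      then show "\<bar>fst q\<bar> \<le> B + B^2 + (\<bar>y\<bar> + B)^2" using q1 by linarith
      have "0 \<le> fst q ^ 2 + (y - snd q) ^ 2" by simp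
      then show "\<bar>fst q ^ 2 + (y - snd q) ^ 2\<bar> \<le> B + B^2 + (\<bar>y\<bar> + B)^2" using a b Bpos by simp
    qed
  next
    fix t :: real assume "t \<noteq> 0"
    have "\<And>q. dist (1/t, y) q = sqrt ((y - snd q)^2 + (1/t - fst q)^2)"
    proof -
      fix q :: "real \<times> real"
      show "dist (1/t, y) q = sqrt ((y - snd q)^2 + (1/t - fst q)^2)"
        using dist_pair_sqrt[of "1/t" y "fst q" "snd q"] by (simp add: add.commute)
    qed
    then show "potential \<rho> (1/t, y) = integral Cb (\<lambda>q. \<rho> q * (1 / sqrt ((y - snd q)^2 + (1/t - fst q)^2)))"
      by (simp add: pot_eq Fe_def)
  qed
qed

end

lemma sq_gt_from: "(a::real) \<ge> 0 \<Longrightarrow> b \<ge> 0 \<Longrightarrow> sqrt 2 * a > b \<Longrightarrow> 2 * a^2 > b^2"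
proof -
  assume a: "a \<ge> 0" and b: "b \<ge> 0" and h: "sqrt 2 * a > b"
  have "b^2 < (sqrt 2 * a)^2" using h b by (intro power_strict_mono) auto
  also have "\<dots> = 2 * a^2" by (simp add: power_mult_distrib)
  finally show ?thesis .
qed

lemma sq_lt_from: "(a::real) \<ge> 0 \<Longrightarrow> b \<ge> 0 \<Longrightarrow> sqrt 2 * a < b \<Longrightarrow> 2 * a^2 < b^2"
proof -
  assume a: "a \<ge> 0" and b: "b \<ge> 0" and h: "sqrt 2 * a < b"
  have "(sqrt 2 * a)^2 < b^2" using h a by (intro power_strict_mono) auto
  also have "(sqrt 2 * a)^2 = 2 * a^2" by (simp add: power_mult_distrib)
  finally show ?thesis .
qed

lemma sign2_pos:
  fixes y c qa qb B :: real
  assumes "\<bar>qa\<bar> \<le> B" "\<bar>qb\<bar> \<le> B" "\<bar>y\<bar> > (\<bar>c\<bar> + B) / sqrt 2 + B"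
  shows "2 * (y - qa)^2 - (c - qb)^2 > 0"
proof -
  have s: "sqrt 2 > 0" by simp
  have "\<bar>y - qa\<bar> \<ge> \<bar>y\<bar> - B" using assms(1) by linarith
  then have "\<bar>y - qa\<bar> > (\<bar>c\<bar> + B) / sqrt 2" using assms(3) by linarith
  then have "sqrt 2 * \<bar>y - qa\<bar> > \<bar>c\<bar> + B" using s by (simp add: field_simps)
  moreover have "\<bar>c - qb\<bar> \<le> \<bar>c\<bar> + B" using assms(2) by linarith
  ultimately have "sqrt 2 * \<bar>y - qa\<bar> > \<bar>c - qb\<bar>" by linarith
  from sq_gt_from[OF _ _ this] show ?thesis by simp
qed

lemma sign2_neg:
  fixes y c qa qb B :: real
  assumes "\<bar>qa\<bar> \<le> B" "\<bar>qb\<bar> \<le> B" "\<bar>y\<bar> < (\<bar>c\<bar> - B) / sqrt 2 - B"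
  shows "2 * (y - qa)^2 - (c - qb)^2 < 0"
proof -
  have s: "sqrt 2 > 0" by simp
  have "\<bar>y - qa\<bar> \<le> \<bar>y\<bar> + B" using assms(1) by linarith
  then have "\<bar>y - qa\<bar> < (\<bar>c\<bar> - B) / sqrt 2" using assms(3) by linarith
  then have "sqrt 2 * \<bar>y - qa\<bar> < \<bar>c\<bar> - B" using s by (simp add: field_simps)
  moreover have "\<bar>c - qb\<bar> \<ge> \<bar>c\<bar> - B" using assms(2) by linarith
  ultimately have "sqrt 2 * \<bar>y - qa\<bar> < \<bar>c - qb\<bar>" by linarith
  from sq_lt_from[OF _ _ this] show ?thesis by simp
qed

context pot
begin

lemma basic: "basic_conditions W2 (potential \<rho>)"
  unfolding basic_conditions_def
  using Fe_smooth pot_analytic pot_vmd pot_md by (auto simp: W2_def)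

lemma int_nonzero:
  fixes h :: "real \<times> real \<Rightarrow> real"
  assumes "continuous_on Cb h" "\<And>q. q \<in> Cb \<Longrightarrow> h q \<ge> 0" "q0 \<in> Cb" "h q0 \<noteq> 0"
  shows "integral Cb h \<noteq> 0"
proof
  assume I: "integral Cb h = 0"
  have "h integrable_on Cb" using assms(1) unfolding Cb_def by (rule integrable_continuous)
  then have "(h has_integral 0) (cbox (-B,-B) (B,B))" using I by (simp add: Cb_def has_integral_integral)
  moreover have "box (-B,-B) (B,B) \<noteq> {}" using Bpos by (auto simp: box_ne_empty Basis_prod_def inner_Pair)
  moreover have "\<And>x. x \<in> box (-B,-B) (B,B) \<Longrightarrow> 0 \<le> h x" using assms(2) box_subset_cbox unfolding Cb_def by blast
  ultimately have "h q0 = 0"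
    using has_integral_0_cbox_imp_0[of "(-B,-B)" "(B,B)" h q0] assms(1,3) by (auto simp: Cb_def)
  with assms(4) show False by simp
qed

end

locale pot_sign = pot +
  assumes sign: "(\<forall>p. \<rho> p \<ge> 0) \<or> (\<forall>p. \<rho> p \<le> 0)"
  and nz: "\<exists>p. \<rho> p \<noteq> 0"
begin

lemma Fe_nonzero:
  assumes p: "p \<notin> W2" and g: "(\<forall>q\<in>Cb. ev e p q > 0) \<or> (\<forall>q\<in>Cb. ev e p q < 0)"
  shows "Fe e p \<noteq> 0"
proof -
  obtain q0 where q0: "\<rho> q0 \<noteq> 0" using nz by blast
  have q0C: "q0 \<in> Cb" using supp[OF q0] by (auto simp: Cb_mem)
  have c: "continuous_on Cb (\<lambda>q. \<rho> q * ev e p q)" by (intro continuous_intros rho_cont ev_cont_p p)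
  have ne: "\<rho> q0 * ev e p q0 \<noteq> 0" using q0 g q0C by auto
  have "\<exists>\<sigma>::real. (\<sigma> = 1 \<or> \<sigma> = -1) \<and> (\<forall>q\<in>Cb. \<sigma> * (\<rho> q * ev e p q) \<ge> 0)"
  proof -
    { assume "\<forall>p. \<rho> p \<ge> 0" "\<forall>q\<in>Cb. ev e p q > 0"
      then have ?thesis by (intro exI[of _ 1]) auto }
    moreover
    { assume "\<forall>p. \<rho> p \<ge> 0" "\<forall>q\<in>Cb. ev e p q < 0"
      then have ?thesis by (intro exI[of _ "-1"]) (auto simp: mult_nonneg_nonpos) }
    moreover
    { assume "\<forall>p. \<rho> p \<le> 0" "\<forall>q\<in>Cb. ev e p q > 0"
      then have ?thesis by (intro exI[of _ "-1"]) (auto simp: mult_nonpos_nonneg) }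
    moreover
    { assume "\<forall>p. \<rho> p \<le> 0" "\<forall>q\<in>Cb. ev e p q < 0"
      then have ?thesis by (intro exI[of _ 1]) (auto simp: mult_nonpos_nonpos) }
    ultimately show ?thesis using sign g by blast
  qed
  then obtain \<sigma> :: real where \<sigma>: "\<sigma> = 1 \<or> \<sigma> = -1" "\<And>q. q \<in> Cb \<Longrightarrow> \<sigma> * (\<rho> q * ev e p q) \<ge> 0" by blast
  have "integral Cb (\<lambda>q. \<sigma> * (\<rho> q * ev e p q)) \<noteq> 0"
    by (rule int_nonzero[OF _ \<sigma>(2) q0C]) (use c \<sigma>(1) ne in \<open>auto intro: continuous_intros\<close>)
  then show ?thesis using \<sigma>(1) by (auto simp: Fe_def)
qed

lemma zeros_loc_gen:
  fixes P :: "real \<Rightarrow> real \<times> real" and a b :: "real \<times> real \<Rightarrow> real"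
  assumes PW: "\<And>y. P y \<notin> W2"
  and ab: "\<And>q. q \<in> Cb \<Longrightarrow> \<bar>a q\<bar> \<le> B \<and> \<bar>b q\<bar> \<le> B"
  and c: "\<bar>c\<bar> > 2*B+1"
  and f1: "\<And>y q. ev (ddl [d] Iv) (P y) q = -(y - a q) / dist (P y) q ^ 3"
  and f2: "\<And>y q. q \<in> Cb \<Longrightarrow> ev (ddl [d,d] Iv) (P y) q = (2*(y - a q)^2 - (c - b q)^2) / dist (P y) q ^ 5"
  and Z: "\<And>y. y \<in> Z \<Longrightarrow> Fe (ddl (replicate k d) Iv) (P y) = 0"
  and k: "k \<le> 2"
  shows "\<exists>M N. M - N \<le> 4*B+2 \<and> Z \<subseteq> {-M<..<-N} \<union> {N<..<M}"
proof -
  have dpos: "dist (P y) q > 0" if "q \<in> Cb" for y q using far(1)[OF PW[of y] that] by linarith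
  have "k = 0 \<or> k = 1 \<or> k = 2" using k by auto
  then show ?thesis
  proof (elim disjE)
    assume k0: "k = 0"
    have "Z = {}"
    proof (rule ccontr)
      assume "Z \<noteq> {}" then obtain y where y: "y \<in> Z" by blast
      have "Fe Iv (P y) \<noteq> 0"
        by (rule Fe_nonzero[OF PW]) (use dpos in simp)
      then show False using Z[OF y] k0 by simp
    qed
    then show ?thesis using Bpos by (intro exI[of _ 0]) auto
  next
    assume k1: "k = 1"
    have "Z \<subseteq> {-(B+1)<..<B+1}"
    proof
      fix y assume y: "y \<in> Z"
      have F: "Fe (ddl [d] Iv) (P y) = 0" using Z[OF y] k1 by simp
      have "\<bar>y\<bar> \<le> B"
      proof (rule ccontr)
        assume "\<not> \<bar>y\<bar> \<le> B"
        then have "y > B \<or> y < -B" by linarith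
        then have "(\<forall>q\<in>Cb. ev (ddl [d] Iv) (P y) q > 0) \<or> (\<forall>q\<in>Cb. ev (ddl [d] Iv) (P y) q < 0)"
        proof
          assume "y > B"
          then have "\<forall>q\<in>Cb. ev (ddl [d] Iv) (P y) q < 0"
            using ab dpos unfolding f1 by (force intro!: divide_neg_pos)
          then show ?thesis by blast
        next
          assume "y < -B"
          then have "\<forall>q\<in>Cb. ev (ddl [d] Iv) (P y) q > 0"
            using ab dpos unfolding f1 by (force intro!: divide_pos_pos)
          then show ?thesis by blast
        qed
        from Fe_nonzero[OF PW this] F show False by simp
      qed
      then show "y \<in> {-(B+1)<..<B+1}" by auto
    qed
    then show ?thesis using Bpos by (intro exI[of _ "B+1"] exI[of _ "-(B+1)"]) auto
  next
    assume k2: "k = 2"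
    define M0 where "M0 = (\<bar>c\<bar> + B) / sqrt 2 + B"
    define N0 where "N0 = (\<bar>c\<bar> - B) / sqrt 2 - B"
    have inZ: "N0 \<le> \<bar>y\<bar> \<and> \<bar>y\<bar> \<le> M0" if y: "y \<in> Z" for y
    proof -
      have F: "Fe (ddl [d,d] Iv) (P y) = 0" using Z[OF y] k2 by (simp add: numeral_2_eq_2)
      have "\<not> \<bar>y\<bar> > M0"
      proof
        assume "\<bar>y\<bar> > M0"
        then have "\<forall>q\<in>Cb. ev (ddl [d,d] Iv) (P y) q > 0"
        proof (intro ballI)
          fix q assume q: "q \<in> Cb"
          have "2*(y - a q)^2 - (c - b q)^2 > 0"
            using sign2_pos[where qa="a q" and qb="b q" and y=y and c=c and B=B] ab[OF q] \<open>\<bar>y\<bar> > M0\<close> unfolding M0_def by blast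
          then show "ev (ddl [d,d] Iv) (P y) q > 0"
            unfolding f2[OF q] by (intro divide_pos_pos zero_less_power dpos[OF q])
        qed
        from Fe_nonzero[OF PW] this F show False by blast
      qed
      moreover have "\<not> \<bar>y\<bar> < N0"
      proof
        assume "\<bar>y\<bar> < N0"
        then have "\<forall>q\<in>Cb. ev (ddl [d,d] Iv) (P y) q < 0"
        proof (intro ballI)
          fix q assume q: "q \<in> Cb"
          have "2*(y - a q)^2 - (c - b q)^2 < 0"
            using sign2_neg[where qa="a q" and qb="b q" and y=y and c=c and B=B] ab[OF q] \<open>\<bar>y\<bar> < N0\<close> unfolding N0_def by blast
          then show "ev (ddl [d,d] Iv) (P y) q < 0"
            unfolding f2[OF q] by (intro divide_neg_pos zero_less_power dpos[OF q])
        qed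
        from Fe_nonzero[OF PW] this F show False by blast
      qed
      ultimately show ?thesis by simp
    qed
    have s2: "sqrt 2 \<ge> (1::real)" by simp
    have "M0 - N0 = 2 * B / sqrt 2 + 2 * B" unfolding M0_def N0_def by (simp add: field_simps)
    also have "2 * B / sqrt 2 \<le> 2 * B" using s2 Bpos by (simp add: field_simps)
    finally have MN: "(M0 + 1) - (N0 - 1) \<le> 4*B+2" by simp
    have "Z \<subseteq> {-(M0+1)<..<-(N0-1)} \<union> {N0-1<..<M0+1}"
    proof
      fix y assume "y \<in> Z"
      from inZ[OF this] show "y \<in> {-(M0+1)<..<-(N0-1)} \<union> {N0-1<..<M0+1}"
        by (cases "y \<ge> 0") auto
    qed
    then show ?thesis using MN by blast
  qed
qed

lemma quasi_aux:
  fixes k :: nat and c :: real assumes k: "k \<le> 2" and c: "\<bar>c\<bar> > 2*B+1"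
  shows "(\<exists>M N. M - N \<le> 4*B+2 \<and> zeros_x W2 (potential \<rho>) k c \<subseteq> {-M<..<-N} \<union> {N<..<M}) \<and>
         (\<exists>M N. M - N \<le> 4*B+2 \<and> zeros_y W2 (potential \<rho>) k c \<subseteq> {-M<..<-N} \<union> {N<..<M})"
proof
  {
    have PW: "(c,y) \<notin> W2" for y using norm_pair_ge1[of c y] c by (simp add: notW2)
    have ab: "\<bar>snd q\<bar> \<le> B \<and> \<bar>fst q\<bar> \<le> B" if "q \<in> Cb" for q using that by (simp add: Cb_mem)
    have f1: "ev (ddl [False] Iv) (c,y) q = -(y - snd q) / dist (c,y) q ^ 3" for y q
      using ev1F[of "(c,y)" q] by simp
    have f2: "ev (ddl [False,False] Iv) (c,y) q = (2*(y - snd q)^2 - (c - fst q)^2) / dist (c,y) q ^ 5"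
      if "q \<in> Cb" for y q using ev2F[of "(c,y)" q] far(3)[OF PW that] by simp
    have Z: "Fe (ddl (replicate k False) Iv) (c,y) = 0" if "y \<in> zeros_x W2 (potential \<rho>) k c" for y
      using that Fe_pderivs[OF PW] by (simp add: zeros_x_def deriv_funpow_y)
    note zeros_loc_gen[where P = "\<lambda>y. (c,y)" and a = snd and b = fst and d = False, OF PW ab c f1 f2 Z k]
  }
  then show "\<exists>M N. M - N \<le> 4*B+2 \<and> zeros_x W2 (potential \<rho>) k c \<subseteq> {-M<..<-N} \<union> {N<..<M}" by blast
next
  {
    have PW: "(x,c) \<notin> W2" for x using norm_pair_ge2[where a=x and b=c] c by (simp add: notW2)
    have ab: "\<bar>fst q\<bar> \<le> B \<and> \<bar>snd q\<bar> \<le> B" if "q \<in> Cb" for q using that by (simp add: Cb_mem)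
    have f1: "ev (ddl [True] Iv) (x,c) q = -(x - fst q) / dist (x,c) q ^ 3" for x q
      using ev1T[of "(x,c)" q] by simp
    have f2: "ev (ddl [True,True] Iv) (x,c) q = (2*(x - fst q)^2 - (c - snd q)^2) / dist (x,c) q ^ 5"
      if "q \<in> Cb" for x q using ev2T[of "(x,c)" q] far(3)[OF PW that] by simp
    have Z: "Fe (ddl (replicate k True) Iv) (x,c) = 0" if "x \<in> zeros_y W2 (potential \<rho>) k c" for x
      using that Fe_pderivs[OF PW] by (simp add: zeros_y_def deriv_funpow_x)
    note zeros_loc_gen[where P = "\<lambda>x. (x,c)" and a = fst and b = snd and d = True, OF PW ab c f1 f2 Z k]
  }
  then show "\<exists>M N. M - N \<le> 4*B+2 \<and> zeros_y W2 (potential \<rho>) k c \<subseteq> {-M<..<-N} \<union> {N<..<M}" by blast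
qed

lemma quasi: "quasi_normal W2 (potential \<rho>)"
  unfolding quasi_normal_def using basic quasi_aux by blast

end

lemma supp_bound:
  fixes \<rho> :: "real \<times> real \<Rightarrow> real"
  assumes "compact (closure {p. \<rho> p \<noteq> (0::real)})"
  shows "\<exists>B>0. \<forall>q. \<rho> q \<noteq> 0 \<longrightarrow> \<bar>fst q\<bar> < B \<and> \<bar>snd q\<bar> < B"
proof -
  have "bounded (closure {p. \<rho> p \<noteq> 0})" using assms compact_imp_bounded by blast
  then obtain b where b: "\<And>x. x \<in> closure {p. \<rho> p \<noteq> 0} \<Longrightarrow> norm x \<le> b" unfolding bounded_iff by blast
  show ?thesis
  proof (intro exI[of _ "\<bar>b\<bar> + 1"] conjI allI impI)
    show "\<bar>b\<bar> + 1 > 0" by simp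
    fix q :: "real \<times> real" assume "\<rho> q \<noteq> 0"
    then have "q \<in> {p. \<rho> p \<noteq> 0}" by simp
    then have "q \<in> closure {p. \<rho> p \<noteq> 0}" by (rule closure_subset[THEN subsetD])
    then have nq: "norm q \<le> b" by (rule b)
    have "\<bar>fst q\<bar> \<le> norm q" "\<bar>snd q\<bar> \<le> norm q"
      using norm_pair_ge1[of "fst q" "snd q"] norm_pair_ge2[where a="fst q" and b="snd q"] by simp_all
    then show "\<bar>fst q\<bar> < \<bar>b\<bar> + 1" "\<bar>snd q\<bar> < \<bar>b\<bar> + 1" using nq by linarith+
  qed
qed

lemma part2_gen:
  assumes "continuous_on UNIV \<rho>" "(\<forall>p. \<rho> p \<ge> 0) \<or> (\<forall>p. \<rho> p \<le> 0)" "\<exists>p. \<rho> p \<noteq> 0"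
    "\<And>q. \<rho> q \<noteq> 0 \<Longrightarrow> \<bar>fst q\<bar> < B \<and> \<bar>snd q\<bar> < B" "B > 0"
  shows "quasi_normal (pot.W2 B) (potential \<rho>)"
proof -
  have "pot_sign \<rho> B"
    by (intro pot_sign.intro pot.intro pot_sign_axioms.intro assms(1,5,2,3)) (erule assms(4))
  then interpret pot_sign \<rho> B .
  show ?thesis by (rule quasi)
qed

lemma part2:
  assumes "continuous_on UNIV \<rho>" "\<forall>p. \<rho> p \<ge> 0" "compact (closure {p. \<rho> p \<noteq> 0})" "\<exists>p. \<rho> p \<noteq> 0"
  shows "\<exists>W. quasi_normal W (potential \<rho>)"
proof -
  obtain B where "B > 0" "\<And>q. \<rho> q \<noteq> 0 \<Longrightarrow> \<bar>fst q\<bar> < B \<and> \<bar>snd q\<bar> < B" using supp_bound[OF assms(3)] by blast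
  then show ?thesis using part2_gen[OF assms(1) _ assms(4)] assms(2) by blast
qed

lemma part3:
  assumes sm: "smooth_on UNIV \<rho>" and cpt: "compact (closure {p. \<rho> p \<noteq> 0})" and nz: "\<exists>p. \<rho> p \<noteq> 0"
  shows "\<exists>W. quasi_split_normal W (potential \<rho>)"
proof -
  have cont: "continuous_on UNIV \<rho>"
    using sm unfolding smooth_on_def by (metis differentiable_imp_continuous_on pderivs.simps(1))
  obtain B where B: "B > 0" and supp: "\<And>q. \<rho> q \<noteq> 0 \<Longrightarrow> \<bar>fst q\<bar> < B \<and> \<bar>snd q\<bar> < B"
    using supp_bound[OF cpt] by blast
  have "pot \<rho> B" by (intro pot.intro cont B) (erule supp)
  then interpret P: pot \<rho> B .
  define \<rho>1 where "\<rho>1 p = max (\<rho> p) 0" for p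
  define \<rho>2 where "\<rho>2 p = min (\<rho> p) 0" for p
  have c1: "continuous_on UNIV \<rho>1" unfolding \<rho>1_def by (intro continuous_intros cont)
  have c2: "continuous_on UNIV \<rho>2" unfolding \<rho>2_def by (intro continuous_intros cont)
  have s1: "\<bar>fst q\<bar> < B \<and> \<bar>snd q\<bar> < B" if "\<rho>1 q \<noteq> 0" for q
  proof -
    have "\<rho> q \<noteq> 0" using that by (auto simp: \<rho>1_def)
    then show ?thesis using supp by blast
  qed
  have s2: "\<bar>fst q\<bar> < B \<and> \<bar>snd q\<bar> < B" if "\<rho>2 q \<noteq> 0" for q
  proof -
    have "\<rho> q \<noteq> 0" using that by (auto simp: \<rho>2_def)
    then show ?thesis using supp by blast
  qed
  have "pot \<rho>1 B" by (intro pot.intro c1 B) (erule s1)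
  then interpret P1: pot \<rho>1 B .
  have "pot \<rho>2 B" by (intro pot.intro c2 B) (erule s2)
  then interpret P2: pot \<rho>2 B .
  have split: "\<exists>R f1 f2 W1 W2. quasi_normal W1 f1 \<and> quasi_normal W2 f2 \<and> (\<forall>p. norm p > R \<longrightarrow> potential \<rho> p = f1 p + f2 p)"
  proof (cases "(\<exists>p. \<rho>1 p \<noteq> 0) \<and> (\<exists>p. \<rho>2 p \<noteq> 0)")
    case True
    have q1: "quasi_normal (pot.W2 B) (potential \<rho>1)"
      by (rule part2_gen[OF c1 _ _ s1 B]) (use True in \<open>auto simp: \<rho>1_def\<close>)
    have q2: "quasi_normal (pot.W2 B) (potential \<rho>2)"
      by (rule part2_gen[OF c2 _ _ s2 B]) (use True in \<open>auto simp: \<rho>2_def\<close>)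
    have eq: "potential \<rho> p = potential \<rho>1 p + potential \<rho>2 p" if p: "norm p > 2*B+1" for p
    proof -
      have pW: "p \<notin> P.W2" using p by (simp add: P.notW2)
      have "potential \<rho> p = integral P.Cb (\<lambda>q. \<rho>1 q * ev Iv p q + \<rho>2 q * ev Iv p q)"
        unfolding P.pot_eq P.Fe_def by (rule integral_cong) (simp add: \<rho>1_def \<rho>2_def algebra_simps split: split_max split_min)
      also have "\<dots> = potential \<rho>1 p + potential \<rho>2 p"
        unfolding P1.pot_eq P2.pot_eq P1.Fe_def P2.Fe_def
        by (rule integral_add[OF P1.int_p[OF pW] P2.int_p[OF pW]])
      finally show ?thesis .
    qed
    show ?thesis using q1 q2 eq by blast
  next
    case False
    then have "(\<forall>p. \<rho>1 p = 0) \<or> (\<forall>p. \<rho>2 p = 0)" by blast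
    then have sg: "(\<forall>p. \<rho> p \<ge> 0) \<or> (\<forall>p. \<rho> p \<le> 0)"
    proof
      assume h: "\<forall>p. \<rho>1 p = 0"
      have "\<rho> p \<le> 0" for p using h[rule_format, of p] unfolding \<rho>1_def by linarith
      then show ?thesis by blast
    next
      assume h: "\<forall>p. \<rho>2 p = 0"
      have "\<rho> p \<ge> 0" for p using h[rule_format, of p] unfolding \<rho>2_def by linarith
      then show ?thesis by blast
    qed
    define \<rho>h where "\<rho>h p = \<rho> p / 2" for p
    have ch: "continuous_on UNIV \<rho>h" unfolding \<rho>h_def by (intro continuous_intros cont) auto
    have sh: "\<bar>fst q\<bar> < B \<and> \<bar>snd q\<bar> < B" if "\<rho>h q \<noteq> 0" for q
  proof -
    have "\<rho> q \<noteq> 0" using that by (auto simp: \<rho>h_def)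
    then show ?thesis using supp by blast
  qed
    have qh: "quasi_normal (pot.W2 B) (potential \<rho>h)"
      by (rule part2_gen[OF ch _ _ sh B]) (use sg nz in \<open>auto simp: \<rho>h_def\<close>)
    have eq: "potential \<rho> p = potential \<rho>h p + potential \<rho>h p" for p
    proof -
      have "potential \<rho>h p = integral UNIV (\<lambda>q. (1/2) *\<^sub>R (\<rho> q / dist p q))"
        unfolding potential_def \<rho>h_def by (rule integral_cong) simp
      also have "\<dots> = (1/2) *\<^sub>R potential \<rho> p" by (simp only: integral_cmul potential_def)
      finally show ?thesis by simp
    qed
    show ?thesis using qh eq by blast
  qed
  have "quasi_split_normal P.W2 (potential \<rho>)"
    unfolding quasi_split_normal_def using P.basic split by blast
  then show ?thesis by blast
qed

theorem lemma8:
  shows "(\<forall>(a::real) (b::real) (s::real). s > 0 \<longrightarrow>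
            normal (cball (a,b) s) (\<lambda>p. 1 / dist p (a,b)))
       \<and> (\<forall>\<rho> :: real \<times> real \<Rightarrow> real.
            continuous_on UNIV \<rho> \<and> (\<forall>p. \<rho> p \<ge> 0) \<and>
            compact (closure {p. \<rho> p \<noteq> 0}) \<and> (\<exists>p. \<rho> p \<noteq> 0) \<longrightarrow>
            (\<exists>W. quasi_normal W (potential \<rho>)))
       \<and> (\<forall>\<rho> :: real \<times> real \<Rightarrow> real.
            smooth_on UNIV \<rho> \<and>
            compact (closure {p. \<rho> p \<noteq> 0}) \<and> (\<exists>p. \<rho> p \<noteq> 0) \<longrightarrow>
            (\<exists>W. quasi_split_normal W (potential \<rho>)))"
  using part1 part2 part3 by blast

end
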